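(* Let $\Gamma$ be a countable simplicial graph (no loops or multiple edges) and for each vertex $v\in V(\Gamma)$ let $G_v$ be a finitely generated group with a finite generating set $S_v=S_v^{-1}$ not containing the identity. Fix an injective map $\bar w:V(\Gamma)\to\{1,2,3,\dots\}$ (a one-to-one correspondence with $\mathbb{N}$ when $\Gamma$ is infinite) and equip the graph product $\Gamma\mathfrak{G}$ with the left-invariant metric $d(g,h)=\|g^{-1}h\|$, where $\|\gamma\|=\inf\{\sum_i w(s_i)\mid \gamma=s_1\cdots s_m,\ s_i\in\bigsqcup_v S_v\}$ (and $\|e\|=0$), with $w(s)=\bar w(v)$ for $s\in S_v$. Let $r>0$, let $\Gamma_r$ be the full subgraph of $\Gamma$ on the vertex set $\bar w^{-1}([0,r])$, and let $\Gamma_r\mathfrak{G}$ be the subgroup of $\Gamma\mathfrak{G}$ generated by the $G_v$ with $v\in V(\Gamma_r)$. Then every element of $\Gamma\mathfrak{G}$ can be written in the form $xb$ with $x$ permissible and $b\in\Gamma_r\mathfrak{G}$. Moreover, if $x\neq x'$ are permissible, then $d(xb,x'b')>r$ for all $b,b'\in\Gamma_r\mathfrak{G}$.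
   Context: The graph product $\Gamma\mathfrak{G}$ of groups $\{G_v\}_{v\in V(\Gamma)}$ is the free product of the $G_v$ modulo the relations $gg'=g'g$ for all $g\in G_v$, $g'\in G_{v'}$ whenever $\{v,v'\}$ is an edge of $\Gamma$. An expression $g=g_1\cdots g_\ell$ is an expression in syllables if each $g_i$ is non-trivial and lies in a single vertex group, and no two consecutive $g_i,g_{i+1}$ lie in the same vertex group. An element $x\in\Gamma\mathfrak{G}$ is called permissible (with respect to $\Gamma_r$) if no reduced word in syllables presenting $x$ ends with a non-trivial syllable belonging to $\Gamma_r\mathfrak{G}$ (i.e. to a vertex group $G_v$ with $v\in V(\Gamma_r)$); the identity is considered permissible. *)

theory Defs
  imports "HOL-Algebra.Algebra" "HOL-Library.Countable_Set"
begin

text \<open>Graph product of a family of groups G v (v in V) over a simplicial graph (V, E).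
  Elements are equivalence classes of words whose letters are pairs (v, g) with
  g in the carrier of G v.\<close>

definition gp_letters :: "'v set \<Rightarrow> ('v \<Rightarrow> 'g monoid) \<Rightarrow> ('v \<times> 'g) set" where
  "gp_letters V G = {(v, g). v \<in> V \<and> g \<in> carrier (G v)}"

inductive gp_move :: "('v \<Rightarrow> 'v \<Rightarrow> bool) \<Rightarrow> ('v \<Rightarrow> 'g monoid) \<Rightarrow> ('v \<times> 'g) list \<Rightarrow> ('v \<times> 'g) list \<Rightarrow> bool"
  for E G where
  merge: "gp_move E G (u @ [(v, a), (v, b)] @ w) (u @ [(v, a \<otimes>\<^bsub>G v\<^esub> b)] @ w)"
| delete: "gp_move E G (u @ [(v, \<one>\<^bsub>G v\<^esub>)] @ w) (u @ w)"
| commute: "E v v' \<Longrightarrow> gp_move E G (u @ [(v, a), (v', b)] @ w) (u @ [(v', b), (v, a)] @ w)"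

definition gp_rel :: "'v set \<Rightarrow> ('v \<Rightarrow> 'v \<Rightarrow> bool) \<Rightarrow> ('v \<Rightarrow> 'g monoid) \<Rightarrow> (('v \<times> 'g) list \<times> ('v \<times> 'g) list) set" where
  "gp_rel V E G = {(x, y). x \<in> lists (gp_letters V G) \<and>
     (symclp (\<lambda>a b. gp_move E G a b \<and> a \<in> lists (gp_letters V G) \<and> b \<in> lists (gp_letters V G)))\<^sup>*\<^sup>* x y}"

definition gp_class :: "'v set \<Rightarrow> ('v \<Rightarrow> 'v \<Rightarrow> bool) \<Rightarrow> ('v \<Rightarrow> 'g monoid) \<Rightarrow> ('v \<times> 'g) list \<Rightarrow> ('v \<times> 'g) list set" where
  "gp_class V E G x = gp_rel V E G `` {x}"

definition gp_mult :: "'v set \<Rightarrow> ('v \<Rightarrow> 'v \<Rightarrow> bool) \<Rightarrow> ('v \<Rightarrow> 'g monoid) \<Rightarrow> ('v \<times> 'g) list set \<Rightarrow> ('v \<times> 'g) list set \<Rightarrow> ('v \<times> 'g) list set" where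
  "gp_mult V E G A B = {z. \<exists>x\<in>A. \<exists>y\<in>B. z \<in> gp_class V E G (x @ y)}"

definition graph_product :: "'v set \<Rightarrow> ('v \<Rightarrow> 'v \<Rightarrow> bool) \<Rightarrow> ('v \<Rightarrow> 'g monoid) \<Rightarrow> ('v \<times> 'g) list set monoid" where
  "graph_product V E G =
    \<lparr> carrier = lists (gp_letters V G) // gp_rel V E G,
      monoid.mult = gp_mult V E G,
      one = gp_class V E G [] \<rparr>"

definition gp_sub :: "'v set \<Rightarrow> ('v \<Rightarrow> 'v \<Rightarrow> bool) \<Rightarrow> ('v \<Rightarrow> 'g monoid) \<Rightarrow> 'v set \<Rightarrow> ('v \<times> 'g) list set set" where
  "gp_sub V E G U = generate (graph_product V E G)
      (\<Union>v\<in>U. (\<lambda>g. gp_class V E G [(v, g)]) ` carrier (G v))"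

definition gp_norm :: "'v set \<Rightarrow> ('v \<Rightarrow> 'v \<Rightarrow> bool) \<Rightarrow> ('v \<Rightarrow> 'g monoid) \<Rightarrow> ('v \<Rightarrow> 'g set) \<Rightarrow> ('v \<Rightarrow> nat)
    \<Rightarrow> ('v \<times> 'g) list set \<Rightarrow> real" where
  "gp_norm V E G S wbar \<gamma> = Inf {(\<Sum>(v, s)\<leftarrow>ws. real (wbar v)) | ws.
      ws \<in> lists {(v, s). v \<in> V \<and> s \<in> S v} \<and> gp_class V E G ws = \<gamma>}"

definition gp_dist :: "'v set \<Rightarrow> ('v \<Rightarrow> 'v \<Rightarrow> bool) \<Rightarrow> ('v \<Rightarrow> 'g monoid) \<Rightarrow> ('v \<Rightarrow> 'g set) \<Rightarrow> ('v \<Rightarrow> nat)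
    \<Rightarrow> ('v \<times> 'g) list set \<Rightarrow> ('v \<times> 'g) list set \<Rightarrow> real" where
  "gp_dist V E G S wbar g h =
     gp_norm V E G S wbar (inv\<^bsub>graph_product V E G\<^esub> g \<otimes>\<^bsub>graph_product V E G\<^esub> h)"

definition syllable_word :: "'v set \<Rightarrow> ('v \<Rightarrow> 'g monoid) \<Rightarrow> ('v \<times> 'g) list \<Rightarrow> bool" where
  "syllable_word V G ws \<longleftrightarrow>
     ws \<in> lists {(v, g). v \<in> V \<and> g \<in> carrier (G v) \<and> g \<noteq> \<one>\<^bsub>G v\<^esub>} \<and>
     (\<forall>i. Suc i < length ws \<longrightarrow> fst (ws ! i) \<noteq> fst (ws ! Suc i))"

definition reduced_syllable_word :: "'v set \<Rightarrow> ('v \<Rightarrow> 'v \<Rightarrow> bool) \<Rightarrow> ('v \<Rightarrow> 'g monoid)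
    \<Rightarrow> ('v \<times> 'g) list set \<Rightarrow> ('v \<times> 'g) list \<Rightarrow> bool" where
  "reduced_syllable_word V E G x ws \<longleftrightarrow>
     syllable_word V G ws \<and> gp_class V E G ws = x \<and>
     (\<forall>ws'. syllable_word V G ws' \<and> gp_class V E G ws' = x \<longrightarrow> length ws \<le> length ws')"

definition permissible :: "'v set \<Rightarrow> ('v \<Rightarrow> 'v \<Rightarrow> bool) \<Rightarrow> ('v \<Rightarrow> 'g monoid) \<Rightarrow> 'v set
    \<Rightarrow> ('v \<times> 'g) list set \<Rightarrow> bool" where
  "permissible V E G U x \<longleftrightarrow>
     \<not> (\<exists>ws. reduced_syllable_word V E G x ws \<and> ws \<noteq> [] \<and> fst (last ws) \<in> U)"

end

theory Submission
  imports Defs "HOL-Library.Multiset"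
begin


locale gpl =
  fixes V :: "'v set" and E :: "'v \<Rightarrow> 'v \<Rightarrow> bool" and G :: "'v \<Rightarrow> 'g monoid"
  assumes E_sym: "E u v \<Longrightarrow> E v u"
    and E_irrefl: "\<not> E v v"
    and grp: "v \<in> V \<Longrightarrow> group (G v)"
begin

abbreviation "L \<equiv> gp_letters V G"
abbreviation "rel \<equiv> gp_rel V E G"
abbreviation "cls \<equiv> gp_class V E G"
abbreviation "GP \<equiv> graph_product V E G"

definition stp where "stp a b \<longleftrightarrow> gp_move E G a b \<and> a \<in> lists L \<and> b \<in> lists L"

lemma rel_def': "rel = {(x,y). x \<in> lists L \<and> (symclp stp)\<^sup>*\<^sup>* x y}"
  unfolding gp_rel_def stp_def[abs_def] by simp

lemma L_iff: "(v,g) \<in> L \<longleftrightarrow> v \<in> V \<and> g \<in> carrier (G v)"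
  by (simp add: gp_letters_def)

lemma star_lists: "(symclp stp)\<^sup>*\<^sup>* x y \<Longrightarrow> x \<in> lists L \<Longrightarrow> y \<in> lists L"
  by (induction rule: rtranclp_induct) (auto simp: symclp_def stp_def)

lemma rel_lists: "(x,y) \<in> rel \<Longrightarrow> x \<in> lists L \<and> y \<in> lists L"
  using star_lists by (auto simp: rel_def')

lemma star_sym: "(symclp stp)\<^sup>*\<^sup>* x y \<Longrightarrow> (symclp stp)\<^sup>*\<^sup>* y x"
proof (induction rule: rtranclp_induct)
  case base then show ?case by simp
next
  case (step y z)
  then have "symclp stp z y" by (auto simp: symclp_def)
  then show ?case using step by (meson converse_rtranclp_into_rtranclp)
qed

lemma rel_equiv: "equiv (lists L) rel"
proof (rule equivI)
  have sub: "rel \<subseteq> lists L \<times> lists L"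
  proof (rule subsetI)
    fix p assume "p \<in> rel" then show "p \<in> lists L \<times> lists L" using rel_lists by (cases p) auto
  qed
  then show "rel \<subseteq> lists L \<times> lists L" .
  moreover have "\<forall>x\<in>lists L. (x,x)\<in>rel" by (auto simp: rel_def')
  ultimately show "refl_on (lists L) rel" by (simp add: refl_on_def)
  show "sym rel" unfolding sym_def
  proof (intro allI impI)
    fix x y assume "(x,y) \<in> rel"
    then have "x \<in> lists L" "(symclp stp)\<^sup>*\<^sup>* x y" by (auto simp: rel_def')
    then show "(y,x) \<in> rel" using star_sym star_lists by (auto simp: rel_def')
  qed
  show "trans rel" unfolding trans_def by (auto simp: rel_def')
qed

lemma move_rel: "gp_move E G x y \<Longrightarrow> x \<in> lists L \<Longrightarrow> y \<in> lists L \<Longrightarrow> (x,y) \<in> rel"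
  by (auto simp: rel_def' stp_def symclp_def)

lemma rel_trans: "(x,y) \<in> rel \<Longrightarrow> (y,z) \<in> rel \<Longrightarrow> (x,z) \<in> rel"
  using rel_equiv by (meson equiv_def transD)

lemma rel_sym: "(x,y) \<in> rel \<Longrightarrow> (y,x) \<in> rel"
  using rel_equiv by (meson equiv_def symD)

lemma rel_refl: "x \<in> lists L \<Longrightarrow> (x,x) \<in> rel"
  using rel_equiv by (meson equiv_def refl_onD)

lemma move_ctx: "gp_move E G x y \<Longrightarrow> gp_move E G (u@x@t) (u@y@t)"
proof (induction rule: gp_move.induct)
  case (merge u' v a b w)
  then show ?case using gp_move.merge[of E G "u@u'" v a b "w@t"] by simp
next
  case (delete u' v w)
  then show ?case using gp_move.delete[of E G "u@u'" v "w@t"] by simp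
next
  case (commute v v' u' a b w)
  then show ?case using gp_move.commute[of E v v' G "u@u'" a b "w@t"] by simp
qed

lemma star_ctx: "(symclp stp)\<^sup>*\<^sup>* x y \<Longrightarrow> u \<in> lists L \<Longrightarrow> t \<in> lists L \<Longrightarrow> (symclp stp)\<^sup>*\<^sup>* (u@x@t) (u@y@t)"
proof (induction rule: rtranclp_induct)
  case base then show ?case by simp
next
  case (step y z)
  have "symclp stp (u@y@t) (u@z@t)"
    using step(2,4,5) by (auto simp: symclp_def stp_def intro: move_ctx)
  then show ?case using step by (meson rtranclp.rtrancl_into_rtrancl)
qed

lemma rel_ctx: "(x,y) \<in> rel \<Longrightarrow> u \<in> lists L \<Longrightarrow> t \<in> lists L \<Longrightarrow> (u@x@t, u@y@t) \<in> rel"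
  using star_ctx by (auto simp: rel_def')

lemma rel_app: "(x,y) \<in> rel \<Longrightarrow> (x',y') \<in> rel \<Longrightarrow> (x@x', y@y') \<in> rel"
proof -
  assume a: "(x,y) \<in> rel" "(x',y') \<in> rel"
  then have l: "x \<in> lists L" "y \<in> lists L" "x' \<in> lists L" "y' \<in> lists L" using rel_lists by auto
  have "(x@x'@[], y@x'@[]) \<in> rel" using rel_ctx[OF a(1), of "[]" "x'"] l by simp
  moreover have "(y@x'@[], y@y'@[]) \<in> rel" using rel_ctx[OF a(2), of y "[]"] l by simp
  ultimately show ?thesis using rel_trans by simp
qed

lemma cls_in: "w \<in> lists L \<Longrightarrow> cls w \<in> carrier GP"
  by (auto simp: graph_product_def gp_class_def quotient_def)

lemma carrier_GP: "Y \<in> carrier GP \<Longrightarrow> \<exists>w \<in> lists L. Y = cls w"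
  by (auto simp: graph_product_def gp_class_def elim!: quotientE)

lemma cls_eq: "x \<in> lists L \<Longrightarrow> y \<in> lists L \<Longrightarrow> cls x = cls y \<longleftrightarrow> (x,y) \<in> rel"
  unfolding gp_class_def using eq_equiv_class_iff[OF rel_equiv] by simp

lemma mult_cls: "x \<in> lists L \<Longrightarrow> y \<in> lists L \<Longrightarrow> cls x \<otimes>\<^bsub>GP\<^esub> cls y = cls (x@y)"
proof -
  assume xy: "x \<in> lists L" "y \<in> lists L"
  have "{z. \<exists>x'\<in>cls x. \<exists>y'\<in>cls y. z \<in> cls (x'@y')} = cls (x@y)"
  proof (intro equalityI subsetI)
    fix z assume "z \<in> {z. \<exists>x'\<in>cls x. \<exists>y'\<in>cls y. z \<in> cls (x'@y')}"
    then obtain x' y' where h: "(x,x') \<in> rel" "(y,y') \<in> rel" "(x'@y', z) \<in> rel"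
      by (auto simp: gp_class_def)
    then show "z \<in> cls (x@y)" using rel_app[OF h(1) h(2)] rel_trans h(3) by (auto simp: gp_class_def)
  next
    fix z assume "z \<in> cls (x@y)"
    then show "z \<in> {z. \<exists>x'\<in>cls x. \<exists>y'\<in>cls y. z \<in> cls (x'@y')}"
      using xy rel_refl by (auto simp: gp_class_def)
  qed
  then show ?thesis by (simp add: graph_product_def gp_mult_def)
qed

lemma one_GP: "\<one>\<^bsub>GP\<^esub> = cls []"
  by (simp add: graph_product_def)

definition linv :: "'v \<times> 'g \<Rightarrow> 'v \<times> 'g" where "linv c = (fst c, inv\<^bsub>G (fst c)\<^esub> snd c)"
definition winv :: "('v \<times> 'g) list \<Rightarrow> ('v \<times> 'g) list" where "winv w = rev (map linv w)"

lemma linv_L: "c \<in> L \<Longrightarrow> linv c \<in> L"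
  using grp by (cases c) (auto simp: L_iff linv_def gp_letters_def)

lemma winv_L: "w \<in> lists L \<Longrightarrow> winv w \<in> lists L"
  using linv_L by (auto simp: winv_def)

lemma letter_inv_rel: "c \<in> L \<Longrightarrow> ([c, linv c], []) \<in> rel"
proof -
  assume c: "c \<in> L"
  obtain v g where cv: "c = (v,g)" by (cases c)
  have v: "v \<in> V" and g: "g \<in> carrier (G v)" using c cv by (auto simp: L_iff)
  interpret group "G v" using grp v .
  have 1: "gp_move E G ([] @ [(v,g),(v,inv\<^bsub>G v\<^esub> g)] @ []) ([] @ [(v, g \<otimes>\<^bsub>G v\<^esub> inv\<^bsub>G v\<^esub> g)] @ [])"
    by (rule gp_move.merge)
  have 2: "gp_move E G ([] @ [(v, \<one>\<^bsub>G v\<^esub>)] @ []) ([] @ [])" by (rule gp_move.delete)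
  have "([(v,g),(v,inv\<^bsub>G v\<^esub> g)], [(v, \<one>\<^bsub>G v\<^esub>)]) \<in> rel"
    using move_rel[OF 1] g v by (simp add: L_iff)
  moreover have "([(v, \<one>\<^bsub>G v\<^esub>)], []) \<in> rel"
    using move_rel[OF 2] v by (simp add: L_iff)
  ultimately show ?thesis using rel_trans cv by (simp add: linv_def)
qed

lemma winv_rel: "w \<in> lists L \<Longrightarrow> (w @ winv w, []) \<in> rel"
proof (induction w)
  case Nil then show ?case using rel_refl by (simp add: winv_def)
next
  case (Cons c w)
  have c: "c \<in> L" and w: "w \<in> lists L" using Cons by auto
  have "(c # w @ winv w @ [linv c], [c] @ [] @ [linv c]) \<in> rel"
    using rel_ctx[OF Cons.IH[OF w], of "[c]" "[linv c]"] c linv_L by simp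
  moreover have "([c, linv c], []) \<in> rel" using letter_inv_rel c .
  ultimately show ?case using rel_trans by (simp add: winv_def)
qed

lemma winv_winv: "w \<in> lists L \<Longrightarrow> winv (winv w) = w"
proof -
  assume w: "w \<in> lists L"
  have "\<forall>c\<in>set w. linv (linv c) = c"
  proof
    fix c assume "c \<in> set w"
    then have "c \<in> L" using w by auto
    then obtain v g where "c = (v,g)" "v \<in> V" "g \<in> carrier (G v)" by (cases c) (auto simp: L_iff)
    then show "linv (linv c) = c" using group.inv_inv[OF grp] by (simp add: linv_def)
  qed
  then show ?thesis by (simp add: winv_def rev_map map_idI)
qed

lemma GP_group: "group GP"
proof (rule groupI)
  fix x y assume "x \<in> carrier GP" "y \<in> carrier GP"
  then show "x \<otimes>\<^bsub>GP\<^esub> y \<in> carrier GP" using carrier_GP mult_cls cls_in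
    by (metis Cons_in_lists_iff append_in_lists_conv)
next
  show "\<one>\<^bsub>GP\<^esub> \<in> carrier GP" using one_GP cls_in by simp
next
  fix x y z assume "x \<in> carrier GP" "y \<in> carrier GP" "z \<in> carrier GP"
  then obtain a b c where "a \<in> lists L" "b \<in> lists L" "c \<in> lists L" "x = cls a" "y = cls b" "z = cls c"
    using carrier_GP by metis
  then show "x \<otimes>\<^bsub>GP\<^esub> y \<otimes>\<^bsub>GP\<^esub> z = x \<otimes>\<^bsub>GP\<^esub> (y \<otimes>\<^bsub>GP\<^esub> z)"
    by (simp add: mult_cls)
next
  fix x assume "x \<in> carrier GP"
  then obtain a where "a \<in> lists L" "x = cls a" using carrier_GP by metis
  then show "\<one>\<^bsub>GP\<^esub> \<otimes>\<^bsub>GP\<^esub> x = x" by (simp add: one_GP mult_cls)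
next
  fix x assume "x \<in> carrier GP"
  then obtain a where a: "a \<in> lists L" "x = cls a" using carrier_GP by metis
  have "cls (winv a) \<otimes>\<^bsub>GP\<^esub> x = cls []"
    using a winv_L[OF a(1)] winv_rel[OF winv_L[OF a(1)]] winv_winv[OF a(1)]
    by (simp add: mult_cls cls_eq)
  then show "\<exists>y\<in>carrier GP. y \<otimes>\<^bsub>GP\<^esub> x = \<one>\<^bsub>GP\<^esub>"
    using cls_in winv_L a by (metis one_GP)
qed

lemma inv_cls: "w \<in> lists L \<Longrightarrow> inv\<^bsub>GP\<^esub> (cls w) = cls (winv w)"
proof -
  assume w: "w \<in> lists L"
  interpret GPg: group GP by (rule GP_group)
  have "cls (winv w) \<otimes>\<^bsub>GP\<^esub> cls w = \<one>\<^bsub>GP\<^esub>"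
    using w winv_L[OF w] winv_rel[OF winv_L[OF w]] winv_winv[OF w] by (simp add: mult_cls cls_eq one_GP)
  then show ?thesis using GPg.inv_equality cls_in w winv_L by blast
qed

end


definition collv :: "('v \<Rightarrow> 'v \<Rightarrow> bool) \<Rightarrow> 'v list \<Rightarrow> bool" where
  "collv E l \<longleftrightarrow> (\<exists>p a m q. l = p@[a]@m@[a]@q \<and> (\<forall>c\<in>set m. E a c))"

lemma collvI: "l = p@[a]@m@[a]@q \<Longrightarrow> (\<forall>c\<in>set m. E a c) \<Longrightarrow> collv E l"
  unfolding collv_def by blast

lemma collv_ctx: "collv E l \<Longrightarrow> collv E (u@l@t)"
  unfolding collv_def by (metis append.assoc)

lemma collv_snoc: "collv E (l@[x]) \<Longrightarrow> collv E l \<or> (\<exists>p m. l = p@[x]@m \<and> (\<forall>c\<in>set m. E x c))"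
proof -
  assume "collv E (l@[x])"
  then obtain p a m q where h: "l@[x] = p@[a]@m@[a]@q" "\<forall>c\<in>set m. E a c" by (auto simp: collv_def)
  show ?thesis
  proof (cases q rule: rev_exhaust)
    case Nil
    then have "l = p@[a]@m" "x = a" using h by auto
    then show ?thesis using h by (intro disjI2 exI[of _ p] exI[of _ m]) auto
  next
    case (snoc q' y)
    then have "l = p@[a]@m@[a]@q'" using h by simp
    then show ?thesis using h by (intro disjI1 collvI[where p=p and a=a and m=m and q=q']) simp_all
  qed
qed

lemma collv_consec: "Suc i < length l \<Longrightarrow> l!i = l!Suc i \<Longrightarrow> collv E l"
proof -
  assume a: "Suc i < length l" "l!i = l!Suc i"
  have "l = take i l @ [l!i] @ [] @ [l!Suc i] @ drop (Suc (Suc i)) l"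
    using a(1) by (simp add: Cons_nth_drop_Suc)
  then show ?thesis using a(2) unfolding collv_def by (metis empty_iff list.set(1))
qed

context gpl
begin

lemma collv_insert: "collv E (P@S) \<Longrightarrow> (\<forall>x\<in>set S. E v x) \<Longrightarrow> collv E (P@[v]@S)"
proof -
  assume c: "collv E (P@S)" and S: "\<forall>x\<in>set S. E v x"
  then obtain p a m q where h: "P@S = p@([a]@m@[a]@q)" "\<forall>c\<in>set m. E a c" by (auto simp: collv_def)
  from append_eq_append_conv2[THEN iffD1, OF h(1)] obtain us where
    "(P = p@us \<and> us@S = [a]@m@[a]@q) \<or> (P@us = p \<and> S = us@[a]@m@[a]@q)" by blast
  then show ?thesis
  proof
    assume A: "P@us = p \<and> S = us@[a]@m@[a]@q"
    show ?thesis by (rule collvI[where p="P@[v]@us" and a=a and m=m and q=q]) (use A h(2) in simp_all)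
  next
    assume A: "P = p@us \<and> us@S = [a]@m@[a]@q"
    show ?thesis
    proof (cases us)
      case Nil
      show ?thesis by (rule collvI[where p="P@[v]" and a=a and m=m and q=q]) (use A h(2) Nil in simp_all)
    next
      case (Cons a' us')
      then have aa: "a' = a" and B: "us'@S = m@([a]@q)" using A by auto
      from append_eq_append_conv2[THEN iffD1, OF B] obtain r where
        "(us' = m@r \<and> r@S = [a]@q) \<or> (us'@r = m \<and> S = r@[a]@q)" by blast
      then show ?thesis
      proof
        assume C: "us' = m@r \<and> r@S = [a]@q"
        show ?thesis
        proof (cases r)
          case Nil
          then have Sq: "S = a#q" using C by simp
          then have "E v a" using S by simp
          then have "E a v" by (rule E_sym)
          then show ?thesis
            by (intro collvI[where p=p and a=a and m="m@[v]" and q=q]) (use A C aa Cons h(2) Nil Sq in simp_all)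
        next
          case (Cons a'' r')
          then have r': "a'' = a" "r'@S = q" using C by auto
          show ?thesis
            by (rule collvI[where p=p and a=a and m=m and q="r'@[v]@S"]) (use A C aa \<open>us = a'#us'\<close> Cons r' h(2) in simp_all)
        qed
      next
        assume C: "us'@r = m \<and> S = r@[a]@q"
        then have "E v a" using S by simp
        then have "E a v" by (rule E_sym)
        then show ?thesis
          by (intro collvI[where p=p and a=a and m="us'@[v]@r" and q=q]) (use A C aa Cons h(2) in auto)
      qed
    qed
  qed
qed

lemma collv_app: "\<not> collv E Xs \<Longrightarrow> \<not> collv E Ys \<Longrightarrow> collv E (Xs@Ys) \<Longrightarrow>
   \<exists>P a M. Xs = P@[a]@M \<and> (\<forall>c\<in>set M. E a c) \<and> a \<in> set Ys"
proof -
  assume Xs: "\<not> collv E Xs" and Ys: "\<not> collv E Ys" and c: "collv E (Xs@Ys)"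
  then obtain p a m q where h: "Xs@Ys = p@([a]@m@[a]@q)" "\<forall>c\<in>set m. E a c" by (auto simp: collv_def)
  from append_eq_append_conv2[THEN iffD1, OF h(1)] obtain us where
    "(Xs = p@us \<and> us@Ys = [a]@m@[a]@q) \<or> (Xs@us = p \<and> Ys = us@[a]@m@[a]@q)" by blast
  then show ?thesis
  proof
    assume "Xs@us = p \<and> Ys = us@[a]@m@[a]@q"
    then have "collv E Ys" using h(2) by (intro collvI[where p=us and a=a and m=m and q=q]) simp_all
    then show ?thesis using Ys by simp
  next
    assume A: "Xs = p@us \<and> us@Ys = [a]@m@[a]@q"
    show ?thesis
    proof (cases us)
      case Nil
      then have "collv E Ys" using A h(2) by (intro collvI[where p="[]" and a=a and m=m and q=q]) simp_all
      then show ?thesis using Ys by simp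
    next
      case (Cons a' us')
      then have aa: "a' = a" and B: "us'@Ys = m@([a]@q)" using A by auto
      from append_eq_append_conv2[THEN iffD1, OF B] obtain r where
        "(us' = m@r \<and> r@Ys = [a]@q) \<or> (us'@r = m \<and> Ys = r@[a]@q)" by blast
      then show ?thesis
      proof
        assume C: "us' = m@r \<and> r@Ys = [a]@q"
        show ?thesis
        proof (cases r)
          case Nil
          then show ?thesis using A C aa Cons h(2)
            by (intro exI[of _ p] exI[of _ a] exI[of _ m]) auto
        next
          case (Cons a'' r')
          then have "Xs = p@[a]@m@[a]@r'" using A C aa \<open>us = a'#us'\<close> by auto
          then have "collv E Xs" using h(2) by (intro collvI[where p=p and a=a and m=m and q=r']) simp_all
          then show ?thesis using Xs by simp
        qed
      next
        assume C: "us'@r = m \<and> Ys = r@[a]@q"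
        then show ?thesis using A aa Cons h(2)
          by (intro exI[of _ p] exI[of _ a] exI[of _ us']) auto
      qed
    qed
  qed
qed

lemma collv_move: "\<not> collv E (P@[a]@M) \<Longrightarrow> (\<forall>c\<in>set M. E a c) \<Longrightarrow> \<not> collv E (P@M@[a])"
proof
  assume n: "\<not> collv E (P@[a]@M)" and M: "\<forall>c\<in>set M. E a c" and c: "collv E (P@M@[a])"
  have aM: "a \<notin> set M" using M E_irrefl by blast
  from collv_snoc[of E "P@M" a] c have "collv E (P@M) \<or> (\<exists>p m. P@M = p@[a]@m \<and> (\<forall>c\<in>set m. E a c))"
    by simp
  then show False
  proof
    assume "collv E (P@M)"
    then show False using collv_insert M n by blast
  next
    assume "\<exists>p m. P@M = p@[a]@m \<and> (\<forall>c\<in>set m. E a c)"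
    then obtain p m where h: "P@M = p@([a]@m)" "\<forall>c\<in>set m. E a c" by auto
    from append_eq_append_conv2[THEN iffD1, OF h(1)] obtain us where
      "(P = p@us \<and> us@M = [a]@m) \<or> (P@us = p \<and> M = us@[a]@m)" by blast
    then show False
    proof
      assume "P@us = p \<and> M = us@[a]@m" then show False using aM by auto
    next
      assume A: "P = p@us \<and> us@M = [a]@m"
      show False
      proof (cases us)
        case Nil then show False using A aM by auto
      next
        case (Cons a' us')
        then have "P = p@[a]@us'" "us'@M = m" using A by auto
        then have "P@[a]@M = p@[a]@us'@[a]@M" "\<forall>c\<in>set us'. E a c" using h(2) by auto
        then have "collv E (P@[a]@M)" by (intro collvI[where p=p and a=a and m=us' and q=M]) simp_all
        then show False using n by simp
      qed
    qed
  qed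
qed


end

fun splitv :: "'v \<Rightarrow> ('v \<times> 'g) list \<Rightarrow> (('v \<times> 'g) list \<times> 'g \<times> ('v \<times> 'g) list) option" where
  "splitv v [] = None"
| "splitv v (c#w) = (case splitv v w of Some (p,h,s) \<Rightarrow> Some (c#p,h,s)
     | None \<Rightarrow> if fst c = v then Some ([], snd c, w) else None)"

lemma splitv_None: "splitv v w = None \<longleftrightarrow> v \<notin> fst ` set w"
proof (induction w)
  case Nil show ?case by simp
next
  case (Cons c w)
  show ?case
  proof (cases "splitv v w")
    case None then show ?thesis using Cons by (cases c) auto
  next
    case (Some t)
    then obtain p h s where "t = (p,h,s)" by (cases t)
    then show ?thesis using Cons Some by auto
  qed
qed

lemma splitv_Some: "splitv v w = Some (p,h,s) \<Longrightarrow> w = p@[(v,h)]@s \<and> v \<notin> fst ` set s"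
proof (induction w arbitrary: p h s)
  case Nil then show ?case by simp
next
  case (Cons c w)
  show ?case
  proof (cases "splitv v w")
    case None
    then show ?thesis using Cons.prems splitv_None[of v w] by (cases c) (auto split: if_splits)
  next
    case (Some t)
    then obtain p' h' s' where t: "t = (p',h',s')" by (cases t)
    then show ?thesis using Cons Some by auto
  qed
qed

lemma splitv_eq: "v \<notin> fst ` set s \<Longrightarrow> splitv v (p@[(v,h)]@s) = Some (p,h,s)"
proof (induction p)
  case Nil
  then have "splitv v s = None" by (simp add: splitv_None)
  then show ?case by simp
next
  case (Cons c p)
  have "splitv v (p@[(v,h)]@s) = Some (p,h,s)" using Cons by blast
  then show ?case by simp
qed

definition proj :: "'v \<Rightarrow> 'v \<Rightarrow> ('v \<times> 'g) list \<Rightarrow> ('v \<times> 'g) list" where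
  "proj u v w = filter (\<lambda>c. fst c = u \<or> fst c = v) w"

lemma proj_app[simp]: "proj u v (a@b) = proj u v a @ proj u v b"
  by (simp add: proj_def)

lemma proj_Cons[simp]: "proj u v (c#w) = (if fst c = u \<or> fst c = v then c # proj u v w else proj u v w)"
  by (simp add: proj_def)

lemma proj_Nil[simp]: "proj u v [] = []"
  by (simp add: proj_def)

context gpl
begin

definition NT where "NT = {(v,g). v \<in> V \<and> g \<in> carrier (G v) \<and> g \<noteq> \<one>\<^bsub>G v\<^esub>}"
definition Rs where "Rs w \<longleftrightarrow> w \<in> lists NT \<and> \<not> collv E (map fst w)"

definition ends where
  "ends v w \<longleftrightarrow> (case splitv v w of None \<Rightarrow> False | Some (p,h,s) \<Rightarrow> (\<forall>x\<in>set s. E v (fst x)))"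

definition act :: "('v \<times> 'g) list \<Rightarrow> ('v \<times> 'g) \<Rightarrow> ('v \<times> 'g) list" where
  "act w c = (if snd c = \<one>\<^bsub>G (fst c)\<^esub> then w else
     (case splitv (fst c) w of
        Some (p,h,s) \<Rightarrow> if (\<forall>x\<in>set s. E (fst c) (fst x)) then
            (if h \<otimes>\<^bsub>G (fst c)\<^esub> snd c = \<one>\<^bsub>G (fst c)\<^esub> then p@s
             else p@[(fst c, h \<otimes>\<^bsub>G (fst c)\<^esub> snd c)]@s)
          else w@[c]
      | None \<Rightarrow> w@[c]))"

definition eqv where "eqv w w' \<longleftrightarrow> (\<forall>u v. \<not> E u v \<longrightarrow> proj u v w = proj u v w')"

lemma eqv_refl: "eqv w w" by (simp add: eqv_def)
lemma eqv_sym: "eqv w w' \<Longrightarrow> eqv w' w" by (simp add: eqv_def)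
lemma eqv_trans: "eqv w w' \<Longrightarrow> eqv w' w'' \<Longrightarrow> eqv w w''" by (simp add: eqv_def)

lemma proj_adj: "(\<forall>c\<in>set s. E v (fst c)) \<Longrightarrow> \<not> E x y \<Longrightarrow> v = x \<or> v = y \<Longrightarrow> proj x y s = []"
  unfolding proj_def filter_empty_conv
proof (intro ballI notI)
  fix c assume A: "\<forall>c\<in>set s. E v (fst c)" "\<not> E x y" "v = x \<or> v = y" and c: "c \<in> set s" "fst c = x \<or> fst c = y"
  then have "E v (fst c)" by blast
  then show False using A(2,3) c(2) E_sym E_irrefl by metis
qed

lemma notin_fst: "v \<notin> fst ` set w \<Longrightarrow> c \<in> set w \<Longrightarrow> fst c \<noteq> v"
  by force

lemma proj_none: "v \<notin> fst ` set w \<Longrightarrow> proj v v w = []"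
  unfolding proj_def filter_empty_conv using notin_fst by blast

lemma in_proj: "c \<in> set (proj u v w) \<longleftrightarrow> c \<in> set w \<and> (fst c = u \<or> fst c = v)"
  by (auto simp: proj_def)

lemma ends_proj: "ends v w \<longleftrightarrow> proj v v w \<noteq> [] \<and> (\<forall>u. \<not> E u v \<longrightarrow> fst (last (proj u v w)) = v)"
proof (cases "splitv v w")
  case None
  then have "v \<notin> fst ` set w" by (simp add: splitv_None)
  then have "proj v v w = []" by (rule proj_none)
  then show ?thesis using None by (simp add: ends_def)
next
  case (Some t)
  obtain p h s where "t = (p,h,s)" by (cases t)
  then have t: "splitv v w = Some (p,h,s)" using Some by simp
  have w: "w = p@[(v,h)]@s" and vs: "v \<notin> fst ` set s" using splitv_Some[OF t] by simp_all
  have ne: "proj v v w \<noteq> []" unfolding w by simp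
  show ?thesis
  proof
    assume "ends v w"
    then have A: "\<forall>c\<in>set s. E v (fst c)" using t by (simp add: ends_def)
    have "\<forall>u. \<not> E u v \<longrightarrow> fst (last (proj u v w)) = v"
    proof (intro allI impI)
      fix u assume "\<not> E u v"
      then have "proj u v s = []" using proj_adj[OF A] by blast
      then show "fst (last (proj u v w)) = v" unfolding w by simp
    qed
    then show "proj v v w \<noteq> [] \<and> (\<forall>u. \<not> E u v \<longrightarrow> fst (last (proj u v w)) = v)" using ne by blast
  next
    assume B: "proj v v w \<noteq> [] \<and> (\<forall>u. \<not> E u v \<longrightarrow> fst (last (proj u v w)) = v)"
    have "\<forall>c\<in>set s. E v (fst c)"
    proof (rule ccontr)
      assume "\<not> (\<forall>c\<in>set s. E v (fst c))"
      then obtain c where c: "c \<in> set s" "\<not> E v (fst c)" by blast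
      define u where "u = fst c"
      have nE: "\<not> E u v" using c(2) E_sym u_def by metis
      have cv: "u \<noteq> v" using notin_fst[OF vs c(1)] u_def by simp
      have "c \<in> set (proj u v s)" using c u_def by (simp add: in_proj)
      then have ne2: "proj u v s \<noteq> []" by auto
      then have eq: "last (proj u v w) = last (proj u v s)" unfolding w by simp
      have "last (proj u v s) \<in> set (proj u v s)" using ne2 by simp
      then have l: "last (proj u v w) \<in> set s" "fst (last (proj u v w)) = u \<or> fst (last (proj u v w)) = v"
        unfolding eq in_proj by blast+
      have "fst (last (proj u v w)) \<noteq> v" using notin_fst[OF vs l(1)] .
      then show False using B nE by blast
    qed
    then show "ends v w" using t by (simp add: ends_def)
  qed
qed

lemma lbl: "splitv v w = Some (p,h,s) \<Longrightarrow> last (proj v v w) = (v,h)"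
proof -
  assume t: "splitv v w = Some (p,h,s)"
  then have w: "w = p@[(v,h)]@s" and vs: "v \<notin> fst ` set s" using splitv_Some[OF t] by simp_all
  have "proj v v s = []" using vs by (force simp: proj_def filter_empty_conv)
  then show ?thesis unfolding w by simp
qed

lemma act_one: "act w (v, \<one>\<^bsub>G v\<^esub>) = w" by (simp add: act_def)

lemma act_not_ends: "g \<noteq> \<one>\<^bsub>G v\<^esub> \<Longrightarrow> \<not> ends v w \<Longrightarrow> act w (v,g) = w@[(v,g)]"
  by (auto simp: act_def ends_def split: option.splits)

lemma act_ends: "g \<noteq> \<one>\<^bsub>G v\<^esub> \<Longrightarrow> splitv v w = Some (p,h,s) \<Longrightarrow> (\<forall>x\<in>set s. E v (fst x)) \<Longrightarrow>
   act w (v,g) = (if h \<otimes>\<^bsub>G v\<^esub> g = \<one>\<^bsub>G v\<^esub> then p@s else p@[(v, h \<otimes>\<^bsub>G v\<^esub> g)]@s)"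
  by (simp add: act_def)

lemma ends_split: "ends v w \<Longrightarrow> \<exists>p h s. splitv v w = Some (p,h,s) \<and> (\<forall>x\<in>set s. E v (fst x))"
  by (auto simp: ends_def split: option.splits)

lemma proj_act: "\<not> E x y \<Longrightarrow> proj x y (act w (v,g)) =
  (if v \<noteq> x \<and> v \<noteq> y then proj x y w else if g = \<one>\<^bsub>G v\<^esub> then proj x y w
   else if ends v w then
     (if snd (last (proj v v w)) \<otimes>\<^bsub>G v\<^esub> g = \<one>\<^bsub>G v\<^esub> then butlast (proj x y w)
      else butlast (proj x y w) @ [(v, snd (last (proj v v w)) \<otimes>\<^bsub>G v\<^esub> g)])
   else proj x y w @ [(v,g)])"
proof -
  assume nxy: "\<not> E x y"
  show ?thesis
  proof (cases "g = \<one>\<^bsub>G v\<^esub>")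
    case True then show ?thesis by (simp add: act_one)
  next
    case g: False
    show ?thesis
    proof (cases "ends v w")
      case False
      then show ?thesis using g by (simp add: act_not_ends)
    next
      case True
      then obtain p h s where t: "splitv v w = Some (p,h,s)" and A: "\<forall>x\<in>set s. E v (fst x)"
        using ends_split[OF True] by blast
      then have w: "w = p@[(v,h)]@s" using splitv_Some[OF t] by simp
      have l: "last (proj v v w) = (v,h)" using lbl[OF t] .
      show ?thesis
      proof (cases "v = x \<or> v = y")
        case True
        then have "proj x y s = []" using proj_adj[OF A nxy] by blast
        then show ?thesis using True g act_ends[OF g t A] \<open>ends v w\<close> l unfolding w by auto
      next
        case False
        then show ?thesis using g act_ends[OF g t A] unfolding w by auto
      qed
    qed
  qed
qed

lemma act_eqv: "eqv w w' \<Longrightarrow> eqv (act w c) (act w' c)"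
proof -
  assume e: "eqv w w'"
  obtain v g where c: "c = (v,g)" by (cases c)
  have pe: "\<And>x y. \<not> E x y \<Longrightarrow> proj x y w = proj x y w'" using e by (simp add: eqv_def)
  have pv: "proj v v w = proj v v w'" using pe[OF E_irrefl] .
  have B: "\<forall>u. \<not> E u v \<longrightarrow> fst (last (proj u v w)) = fst (last (proj u v w'))"
  proof (intro allI impI)
    fix u assume "\<not> E u v" then show "fst (last (proj u v w)) = fst (last (proj u v w'))" using pe by simp
  qed
  have en: "ends v w = ends v w'" unfolding ends_proj using pv B by auto
  show ?thesis unfolding eqv_def c
  proof (intro allI impI)
    fix x y assume nxy: "\<not> E x y"
    show "proj x y (act w (v,g)) = proj x y (act w' (v,g))"
      unfolding proj_act[OF nxy] en pv pe[OF nxy] by (rule refl)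
  qed
qed

lemma proj_act_other: "\<not> E x y \<Longrightarrow> v \<noteq> x \<Longrightarrow> v \<noteq> y \<Longrightarrow> proj x y (act w (v,g)) = proj x y w"
  using proj_act[of x y w v g] by simp

lemma ends_act_other: "E v v' \<Longrightarrow> ends v (act w (v',b)) = ends v w"
proof -
  assume e: "E v v'"
  have "v' \<noteq> v" using e E_irrefl by blast
  then have 1: "proj v v (act w (v',b)) = proj v v w" using proj_act_other[OF E_irrefl] by simp
  have 2: "\<And>u. \<not> E u v \<Longrightarrow> proj u v (act w (v',b)) = proj u v w"
  proof -
    fix u assume "\<not> E u v"
    then have "v' \<noteq> u" using e E_sym by metis
    then show "proj u v (act w (v',b)) = proj u v w" using proj_act_other[OF \<open>\<not> E u v\<close> _ \<open>v' \<noteq> v\<close>] by simp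
  qed
  show ?thesis unfolding ends_proj using 1 2 by simp
qed

lemma act_comm_aux: "E v v' \<Longrightarrow> \<not> E x y \<Longrightarrow> v = x \<or> v = y \<Longrightarrow>
   proj x y (act (act w (v,a)) (v',b)) = proj x y (act (act w (v',b)) (v,a))"
proof -
  assume e: "E v v'" and nxy: "\<not> E x y" and vxy: "v = x \<or> v = y"
  have e': "E v' v" using e by (rule E_sym)
  have vv: "v \<noteq> v'" using e E_irrefl by metis
  have pvv: "proj v v (act w (v',b)) = proj v v w" using proj_act_other[OF E_irrefl] vv by simp
  have o: "v' \<noteq> x" "v' \<noteq> y"
  proof -
    show "v' \<noteq> x"
    proof
      assume "v' = x"
      then show False using vxy nxy e e' vv by metis
    qed
    show "v' \<noteq> y"
    proof
      assume "v' = y"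
      then show False using vxy nxy e e' vv by metis
    qed
  qed
  have 1: "proj x y (act (act w (v,a)) (v',b)) = proj x y (act w (v,a))"
    by (rule proj_act_other[OF nxy o])
  have 2: "proj x y (act w (v',b)) = proj x y w"
    by (rule proj_act_other[OF nxy o])
  have 3: "ends v (act w (v',b)) = ends v w" by (rule ends_act_other[OF e])
  have L: "proj x y (act (act w (v',b)) (v,a)) = proj x y (act w (v,a))"
    by (simp only: proj_act[OF nxy, of "act w (v',b)" v a] proj_act[OF nxy, of w v a] 2 3 pvv)
  show ?thesis using 1 L by simp
qed

lemma act_comm: "E v v' \<Longrightarrow> eqv (act (act w (v,a)) (v',b)) (act (act w (v',b)) (v,a))"
proof -
  assume e: "E v v'"
  have e': "E v' v" using e by (rule E_sym)
  show ?thesis unfolding eqv_def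
  proof (intro allI impI)
    fix x y assume nxy: "\<not> E x y"
    show "proj x y (act (act w (v,a)) (v',b)) = proj x y (act (act w (v',b)) (v,a))"
    proof (cases "v = x \<or> v = y")
      case True
      then show ?thesis using act_comm_aux[OF e nxy] by blast
    next
      case F1: False
      show ?thesis
      proof (cases "v' = x \<or> v' = y")
        case True
        then show ?thesis using act_comm_aux[OF e' nxy, of w b a] by simp
      next
        case False
        then show ?thesis using proj_act_other[OF nxy] F1 by simp
      qed
    qed
  qed
qed

lemma eqv_shift: "(\<forall>x\<in>set s. E v (fst x)) \<Longrightarrow> eqv (p@[(v,h)]@s) (p@s@[(v,h)])"
  unfolding eqv_def
proof (intro allI impI)
  fix x y assume A: "\<forall>x\<in>set s. E v (fst x)" and nxy: "\<not> E x y"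
  show "proj x y (p@[(v,h)]@s) = proj x y (p@s@[(v,h)])"
  proof (cases "v = x \<or> v = y")
    case True
    then have "proj x y s = []" using proj_adj[OF A nxy] by blast
    then show ?thesis by simp
  next
    case False then show ?thesis by simp
  qed
qed

lemma eqv_length: "eqv w w' \<Longrightarrow> length w = length w'"
proof -
  assume e: "eqv w w'"
  have "\<And>v. count (mset (map fst w)) v = count (mset (map fst w')) v"
  proof -
    fix v
    have "proj v v w = proj v v w'" using e E_irrefl by (simp add: eqv_def)
    then have "length (filter (\<lambda>c. fst c = v) w) = length (filter (\<lambda>c. fst c = v) w')"
      by (simp add: proj_def)
    then have "count_list (map fst w) v = count_list (map fst w') v"
      by (simp add: count_list_eq_length_filter filter_map o_def eq_commute)
    then show "count (mset (map fst w)) v = count (mset (map fst w')) v"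
      by (simp only: count_mset)
  qed
  then have "mset (map fst w) = mset (map fst w')" by (simp add: multiset_eq_iff)
  then show ?thesis by (metis length_map size_mset)
qed

end


context gpl
begin

lemma NT_L: "c \<in> NT \<Longrightarrow> c \<in> L"
  by (auto simp: NT_def gp_letters_def)

lemma lists_NT_L: "w \<in> lists NT \<Longrightarrow> w \<in> lists L"
  using NT_L by auto

lemma Rs_nil: "Rs []" by (simp add: Rs_def collv_def)

lemma Rs_prefix: "Rs (w@[c]) \<Longrightarrow> Rs w"
  unfolding Rs_def using collv_ctx[of E "map fst w" "[]" "[fst c]"] by auto

lemma map_fst_split: "map fst (p@[(v,h)]@s) = map fst p @ [v] @ map fst s" by simp

lemma act_snoc: assumes R: "Rs (w@[(v,g)])" shows "act w (v,g) = w@[(v,g)]"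
proof -
  have g: "g \<noteq> \<one>\<^bsub>G v\<^esub>" using R by (auto simp: Rs_def NT_def)
  have "\<not> ends v w"
  proof
    assume "ends v w"
    then obtain p h s where t: "splitv v w = Some (p,h,s)" and A: "\<forall>x\<in>set s. E v (fst x)"
      using ends_split by blast
    have w: "w = p@[(v,h)]@s" using splitv_Some[OF t] by simp
    have "map fst (w@[(v,g)]) = map fst p @ [v] @ map fst s @ [v] @ []" unfolding w by simp
    moreover have "\<forall>c\<in>set (map fst s). E v c" using A by auto
    ultimately have "collv E (map fst (w@[(v,g)]))" by (rule collvI)
    then show False using R by (simp add: Rs_def)
  qed
  then show ?thesis using act_not_ends[OF g] by simp
qed

lemma collv_remove: "Rs w \<Longrightarrow> splitv v w = Some (p,h,s) \<Longrightarrow> (\<forall>x\<in>set s. E v (fst x)) \<Longrightarrow>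
   \<not> collv E (map fst (p@s))"
proof
  assume R: "Rs w" and t: "splitv v w = Some (p,h,s)" and A: "\<forall>x\<in>set s. E v (fst x)"
    and c: "collv E (map fst (p@s))"
  have w: "w = p@[(v,h)]@s" using splitv_Some[OF t] by simp
  have A': "\<forall>x\<in>set (map fst s). E v x" using A by auto
  have "collv E (map fst p @ [v] @ map fst s)"
    using collv_insert[of "map fst p" "map fst s" v] c A' by simp
  then show False using R w by (simp add: Rs_def)
qed

lemma not_ends_remove: "Rs w \<Longrightarrow> splitv v w = Some (p,h,s) \<Longrightarrow> (\<forall>x\<in>set s. E v (fst x)) \<Longrightarrow>
   \<not> ends v (p@s)"
proof
  assume R: "Rs w" and t: "splitv v w = Some (p,h,s)" and A: "\<forall>x\<in>set s. E v (fst x)"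
    and e: "ends v (p@s)"
  have w: "w = p@[(v,h)]@s" and vs: "v \<notin> fst ` set s" using splitv_Some[OF t] by simp_all
  obtain p' h' s' where t': "splitv v (p@s) = Some (p',h',s')" and A2: "\<forall>x\<in>set s'. E v (fst x)"
    using ends_split[OF e] by blast
  have eq: "p@s = p'@([(v,h')]@s')" using splitv_Some[OF t'] by simp
  from append_eq_append_conv2[THEN iffD1, OF eq] obtain us where
    "(p = p'@us \<and> us@s = [(v,h')]@s') \<or> (p@us = p' \<and> s = us@[(v,h')]@s')" by blast
  then show False
  proof
    assume "p@us = p' \<and> s = us@[(v,h')]@s'"
    then have "(v,h') \<in> set s" by simp
    then show False using notin_fst[OF vs] by fastforce
  next
    assume B: "p = p'@us \<and> us@s = [(v,h')]@s'"
    show False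
    proof (cases us)
      case Nil
      then have "(v,h') \<in> set s" using B by simp
      then show False using notin_fst[OF vs] by fastforce
    next
      case (Cons c us')
      then have cc: "c = (v,h')" and us': "us'@s = s'" using B by auto
      have p: "p = p'@[(v,h')]@us'" using B Cons cc by simp
      have "map fst w = map fst p' @ [v] @ map fst us' @ [v] @ map fst s"
        unfolding w p by simp
      moreover have "\<forall>x\<in>set (map fst us'). E v x" using A2 us' by auto
      ultimately have "collv E (map fst w)" by (rule collvI)
      then show False using R by (simp add: Rs_def)
    qed
  qed
qed

lemma act_Rs: assumes R: "Rs w" and v: "v \<in> V" and g: "g \<in> carrier (G v)"
  shows "Rs (act w (v,g))"
proof (cases "g = \<one>\<^bsub>G v\<^esub>")
  case True then show ?thesis using R by (simp add: act_one)
next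
  case g1: False
  interpret group "G v" using grp v .
  have wNT: "w \<in> lists NT" using R by (simp add: Rs_def)
  show ?thesis
  proof (cases "ends v w")
    case False
    have a: "act w (v,g) = w@[(v,g)]" using act_not_ends[OF g1 False] .
    have "\<not> collv E (map fst w @ [v])"
    proof
      assume "collv E (map fst w @ [v])"
      then have "collv E (map fst w) \<or> (\<exists>p m. map fst w = p@[v]@m \<and> (\<forall>c\<in>set m. E v c))"
        by (rule collv_snoc)
      then show False
      proof
        assume "collv E (map fst w)" then show False using R by (simp add: Rs_def)
      next
        assume "\<exists>p m. map fst w = p@[v]@m \<and> (\<forall>c\<in>set m. E v c)"
        then obtain P M where PM: "map fst w = P@([v]@M)" "\<forall>c\<in>set M. E v c" by auto
        from map_eq_append_conv[THEN iffD1, OF PM(1)] obtain w1 w2 where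
          w12: "w = w1@w2" "P = map fst w1" "[v]@M = map fst w2" by blast
        from w12(3) obtain c w3 where c: "w2 = c#w3" "fst c = v" "map fst w3 = M"
          by (cases w2) auto
        have wsp: "w = w1@[(v, snd c)]@w3" using w12 c by (cases c) auto
        have vM: "v \<notin> set M" using PM(2) E_irrefl by metis
        have vs: "v \<notin> fst ` set w3" using vM c(3) by (metis list.set_map)
        have "splitv v w = Some (w1, snd c, w3)" unfolding wsp by (rule splitv_eq[OF vs])
        moreover have "\<forall>x\<in>set w3. E v (fst x)"
        proof
          fix x assume "x \<in> set w3"
          then have "fst x \<in> set M" using c(3) by force
          then show "E v (fst x)" using PM(2) by blast
        qed
        ultimately have "ends v w" by (simp add: ends_def)
        then show False using False by simp
      qed
    qed
    then show ?thesis using a wNT g g1 v by (simp add: Rs_def NT_def)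
  next
    case True
    then obtain p h s where t: "splitv v w = Some (p,h,s)" and A: "\<forall>x\<in>set s. E v (fst x)"
      using ends_split by blast
    have w: "w = p@[(v,h)]@s" using splitv_Some[OF t] by simp
    have hN: "(v,h) \<in> NT" using wNT w by auto
    then have h: "h \<in> carrier (G v)" by (simp add: NT_def)
    have a: "act w (v,g) = (if h \<otimes>\<^bsub>G v\<^esub> g = \<one>\<^bsub>G v\<^esub> then p@s else p@[(v, h \<otimes>\<^bsub>G v\<^esub> g)]@s)"
      using act_ends[OF g1 t A] .
    show ?thesis
    proof (cases "h \<otimes>\<^bsub>G v\<^esub> g = \<one>\<^bsub>G v\<^esub>")
      case True
      have "p@s \<in> lists NT" using wNT w by auto
      then show ?thesis using a True collv_remove[OF R t A] by (simp add: Rs_def)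
    next
      case False
      have "p@[(v, h \<otimes>\<^bsub>G v\<^esub> g)]@s \<in> lists NT" using wNT w False h g v by (auto simp: NT_def)
      moreover have "map fst (p@[(v, h \<otimes>\<^bsub>G v\<^esub> g)]@s) = map fst w" unfolding w by simp
      ultimately show ?thesis using a False R by (simp add: Rs_def)
    qed
  qed
qed

lemma act_merge: assumes R: "Rs w" and v: "v \<in> V" and a: "a \<in> carrier (G v)" and b: "b \<in> carrier (G v)"
  shows "eqv (act (act w (v,a)) (v,b)) (act w (v, a \<otimes>\<^bsub>G v\<^esub> b))"
proof -
  interpret group "G v" using grp v .
  show ?thesis
  proof (cases "a = \<one>\<^bsub>G v\<^esub>")
    case True then show ?thesis using b by (simp add: act_one eqv_refl)
  next
    case a1: False
    show ?thesis
    proof (cases "b = \<one>\<^bsub>G v\<^esub>")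
      case True then show ?thesis using a by (simp add: act_one eqv_refl)
    next
      case b1: False
      have wNT: "w \<in> lists NT" using R by (simp add: Rs_def)
      show ?thesis
      proof (cases "ends v w")
        case True
        then obtain p h s where t: "splitv v w = Some (p,h,s)" and A: "\<forall>x\<in>set s. E v (fst x)"
          using ends_split by blast
        have w: "w = p@[(v,h)]@s" and vs: "v \<notin> fst ` set s" using splitv_Some[OF t] by simp_all
        have hN: "(v,h) \<in> NT" using wNT w by auto
        then have h: "h \<in> carrier (G v)" and h1: "h \<noteq> \<one>\<^bsub>G v\<^esub>" by (simp_all add: NT_def)
        have aw: "act w (v,a) = (if h \<otimes>\<^bsub>G v\<^esub> a = \<one>\<^bsub>G v\<^esub> then p@s else p@[(v, h \<otimes>\<^bsub>G v\<^esub> a)]@s)"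
          using act_ends[OF a1 t A] .
        show ?thesis
        proof (cases "h \<otimes>\<^bsub>G v\<^esub> a = \<one>\<^bsub>G v\<^esub>")
          case False
          have t1: "splitv v (p@[(v, h \<otimes>\<^bsub>G v\<^esub> a)]@s) = Some (p, h \<otimes>\<^bsub>G v\<^esub> a, s)"
            by (rule splitv_eq[OF vs])
          have L: "act (act w (v,a)) (v,b) = (if (h \<otimes>\<^bsub>G v\<^esub> a) \<otimes>\<^bsub>G v\<^esub> b = \<one>\<^bsub>G v\<^esub> then p@s
              else p@[(v, (h \<otimes>\<^bsub>G v\<^esub> a) \<otimes>\<^bsub>G v\<^esub> b)]@s)"
            using aw False act_ends[OF b1 t1 A] by simp
          have ass: "(h \<otimes>\<^bsub>G v\<^esub> a) \<otimes>\<^bsub>G v\<^esub> b = h \<otimes>\<^bsub>G v\<^esub> (a \<otimes>\<^bsub>G v\<^esub> b)"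
            using h a b by (simp add: m_assoc)
          show ?thesis
          proof (cases "a \<otimes>\<^bsub>G v\<^esub> b = \<one>\<^bsub>G v\<^esub>")
            case True
            then have "act w (v, a \<otimes>\<^bsub>G v\<^esub> b) = w" by (simp add: act_one)
            moreover have "act (act w (v,a)) (v,b) = w" using L ass True h h1 w by simp
            ultimately show ?thesis by (simp add: eqv_refl)
          next
            case ab: False
            have "act w (v, a \<otimes>\<^bsub>G v\<^esub> b) = (if h \<otimes>\<^bsub>G v\<^esub> (a \<otimes>\<^bsub>G v\<^esub> b) = \<one>\<^bsub>G v\<^esub> then p@s
              else p@[(v, h \<otimes>\<^bsub>G v\<^esub> (a \<otimes>\<^bsub>G v\<^esub> b))]@s)" using act_ends[OF ab t A] .
            then show ?thesis using L ass by (simp add: eqv_refl)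
          qed
        next
          case True
          have ne: "\<not> ends v (p@s)" by (rule not_ends_remove[OF R t A])
          have L: "act (act w (v,a)) (v,b) = p@s@[(v,b)]"
            using aw True act_not_ends[OF b1 ne] by simp
          have ainv: "a = inv\<^bsub>G v\<^esub> h" using True h a by (metis inv_equality l_inv_ex r_inv inv_closed l_cancel r_one)
          have hab: "h \<otimes>\<^bsub>G v\<^esub> (a \<otimes>\<^bsub>G v\<^esub> b) = b"
            using True h a b by (simp add: m_assoc[symmetric])
          show ?thesis
          proof (cases "a \<otimes>\<^bsub>G v\<^esub> b = \<one>\<^bsub>G v\<^esub>")
            case ab: True
            then have "b = h" using hab h by simp
            then have "act (act w (v,a)) (v,b) = p@s@[(v,h)]" using L by simp
            moreover have "act w (v, a \<otimes>\<^bsub>G v\<^esub> b) = p@[(v,h)]@s" using ab w by (simp add: act_one)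
            ultimately show ?thesis using eqv_shift[OF A, of p h] eqv_sym by simp
          next
            case ab: False
            have "act w (v, a \<otimes>\<^bsub>G v\<^esub> b) = p@[(v,b)]@s"
              using act_ends[OF ab t A] hab b1 by simp
            then show ?thesis using L eqv_shift[OF A, of p b] eqv_sym by simp
          qed
        qed
      next
        case False
        have aw: "act w (v,a) = w@[(v,a)]" using act_not_ends[OF a1 False] .
        have vs0: "v \<notin> fst ` set ([] :: ('v \<times> 'g) list)" by simp
        have t1: "splitv v (w@[(v,a)]@[]) = Some (w, a, [])" by (rule splitv_eq[OF vs0])
        have L: "act (act w (v,a)) (v,b) = (if a \<otimes>\<^bsub>G v\<^esub> b = \<one>\<^bsub>G v\<^esub> then w else w@[(v, a \<otimes>\<^bsub>G v\<^esub> b)])"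
          using aw act_ends[OF b1, of "w@[(v,a)]" w a "[]"] t1 by simp
        show ?thesis
        proof (cases "a \<otimes>\<^bsub>G v\<^esub> b = \<one>\<^bsub>G v\<^esub>")
          case True then show ?thesis using L by (simp add: act_one eqv_refl)
        next
          case ab: False
          then show ?thesis using L act_not_ends[OF ab False] by (simp add: eqv_refl)
        qed
      qed
    qed
  qed
qed

end


context gpl
begin

definition phi where "phi w = foldl act [] w"

lemma foldl_eqv: "eqv Xa Ya \<Longrightarrow> eqv (foldl act Xa t) (foldl act Ya t)"
proof (induction t arbitrary: Xa Ya)
  case Nil then show ?case by simp
next
  case (Cons c t)
  then show ?case using act_eqv by simp
qed

lemma foldl_Rs: "Rs Xa \<Longrightarrow> t \<in> lists L \<Longrightarrow> Rs (foldl act Xa t)"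
proof (induction t arbitrary: Xa)
  case Nil then show ?case by simp
next
  case (Cons c t)
  obtain v g where c: "c = (v,g)" by (cases c)
  have "v \<in> V" "g \<in> carrier (G v)" using Cons.prems c by (auto simp: L_iff)
  then have "Rs (act Xa c)" using act_Rs[OF Cons.prems(1)] c by simp
  then show ?case using Cons by simp
qed

lemma phi_Rs': "w \<in> lists L \<Longrightarrow> Rs (phi w)"
  unfolding phi_def using foldl_Rs Rs_nil by blast

lemma phi_move: "gp_move E G w1 w2 \<Longrightarrow> w1 \<in> lists L \<Longrightarrow> w2 \<in> lists L \<Longrightarrow> eqv (phi w1) (phi w2)"
proof (induction rule: gp_move.induct)
  case (merge u v a b t)
  have u: "u \<in> lists L" and l: "(v,a) \<in> L" "(v,b) \<in> L" using merge by auto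
  have v: "v \<in> V" and a: "a \<in> carrier (G v)" and b: "b \<in> carrier (G v)" using l by (auto simp: L_iff)
  have "eqv (act (act (phi u) (v,a)) (v,b)) (act (phi u) (v, a \<otimes>\<^bsub>G v\<^esub> b))"
    using act_merge[OF phi_Rs'[OF u] v a b] .
  then show ?case unfolding phi_def using foldl_eqv by simp
next
  case (delete u v t)
  then show ?case by (simp add: phi_def act_one eqv_refl)
next
  case (commute v v' u a b t)
  then show ?case unfolding phi_def using foldl_eqv act_comm by simp
qed

lemma phi_rel: "(w1,w2) \<in> rel \<Longrightarrow> eqv (phi w1) (phi w2)"
proof -
  assume "(w1,w2) \<in> rel"
  then have "(symclp stp)\<^sup>*\<^sup>* w1 w2" by (simp add: rel_def')
  then show ?thesis
  proof (induction rule: rtranclp_induct)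
    case base then show ?case by (rule eqv_refl)
  next
    case (step y z)
    have "eqv (phi y) (phi z)"
    proof (cases "stp y z")
      case True then show ?thesis using phi_move by (simp add: stp_def)
    next
      case False
      then have "stp z y" using step(2) by (simp add: symclp_def)
      then have "eqv (phi z) (phi y)" using phi_move by (simp add: stp_def)
      then show ?thesis by (rule eqv_sym)
    qed
    then show ?case using step(3) eqv_trans by blast
  qed
qed

lemma phi_id: "Rs w \<Longrightarrow> phi w = w"
proof (induction w rule: rev_induct)
  case Nil then show ?case by (simp add: phi_def)
next
  case (snoc c w)
  obtain v g where c: "c = (v,g)" by (cases c)
  have "phi w = w" using snoc Rs_prefix by blast
  then have "phi (w@[c]) = act w c" by (simp add: phi_def)
  then show ?case using act_snoc snoc.prems c by simp
qed

theorem NF_len: "Rs w \<Longrightarrow> Rs w' \<Longrightarrow> (w,w') \<in> rel \<Longrightarrow> length w = length w'"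
  using phi_rel phi_id eqv_length by metis

lemma commute_block: "(\<forall>c\<in>set m. E v (fst c)) \<Longrightarrow> p \<in> lists L \<Longrightarrow> (v,a) \<in> L \<Longrightarrow> m \<in> lists L \<Longrightarrow> q \<in> lists L \<Longrightarrow>
  (p@[(v,a)]@m@q, p@m@[(v,a)]@q) \<in> rel"
proof (induction m arbitrary: p)
  case Nil then show ?case using rel_refl by simp
next
  case (Cons c m)
  obtain v' b where c: "c = (v',b)" by (cases c)
  have e: "E v v'" using Cons.prems c by simp
  have "gp_move E G (p@[(v,a),(v',b)]@(m@q)) (p@[(v',b),(v,a)]@(m@q))"
    by (rule gp_move.commute[of E v v' G p a b "m@q", OF e])
  then have 1: "(p@[(v,a)]@(c#m)@q, (p@[c])@[(v,a)]@m@q) \<in> rel"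
    using move_rel Cons.prems c by simp
  have 2: "((p@[c])@[(v,a)]@m@q, (p@[c])@m@[(v,a)]@q) \<in> rel"
    using Cons.IH[of "p@[c]"] Cons.prems by simp
  show ?case using rel_trans[OF 1 2] by simp
qed

lemma collv_word: "collv E (map fst w) \<Longrightarrow>
   \<exists>p v a m b q. w = p@[(v,a)]@m@[(v,b)]@q \<and> (\<forall>c\<in>set m. E v (fst c))"
proof -
  assume "collv E (map fst w)"
  then obtain P x M Q where h: "map fst w = P@([x]@M@[x]@Q)" "\<forall>c\<in>set M. E x c"
    by (auto simp: collv_def)
  from map_eq_append_conv[THEN iffD1, OF h(1)] obtain p r1 where
    r1': "w = p@r1" "P = map fst p" "[x]@M@[x]@Q = map fst r1" by blast
  have r1: "w = p@r1" "map fst r1 = [x]@M@[x]@Q" using r1' by simp_all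
  from r1(2) obtain c1 r2 where r2: "r1 = c1#r2" "fst c1 = x" "map fst r2 = M@([x]@Q)"
    by (cases r1) auto
  from map_eq_append_conv[THEN iffD1, OF r2(3)] obtain m r3 where
    r3': "r2 = m@r3" "M = map fst m" "[x]@Q = map fst r3" by blast
  have r3: "r2 = m@r3" "map fst m = M" "map fst r3 = [x]@Q" using r3' by simp_all
  from r3(3) obtain c2 q where r4: "r3 = c2#q" "fst c2 = x"
    by (cases r3) auto
  have c1: "c1 = (x, snd c1)" using r2(2) by (cases c1) simp
  have c2: "c2 = (x, snd c2)" using r4(2) by (cases c2) simp
  have "w = p@[c1]@m@[c2]@q" using r1(1) r2(1) r3(1) r4(1) by simp
  then have ww: "w = p@[(x, snd c1)]@m@[(x, snd c2)]@q" using c1 c2 by metis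
  have "\<forall>c\<in>set m. E x (fst c)"
  proof
    fix c assume "c \<in> set m"
    then have "fst c \<in> set M" using r3(2) by force
    then show "E x (fst c)" using h(2) by blast
  qed
  then show ?thesis using ww by (intro exI[of _ p] exI[of _ x] exI[of _ "snd c1"] exI[of _ m] exI[of _ "snd c2"] exI[of _ q]) simp
qed

lemma reduce: "w \<in> lists L \<Longrightarrow> \<exists>w'. (w,w') \<in> rel \<and> Rs w' \<and> length w' \<le> length w \<and>
   (\<not> Rs w \<longrightarrow> length w' < length w) \<and> set (map fst w') \<subseteq> set (map fst w)"
proof (induction "length w" arbitrary: w rule: less_induct)
  case less
  show ?case
  proof (cases "Rs w")
    case True
    then show ?thesis using rel_refl less.prems by blast
  next
    case nR: False
    have "\<exists>w2. (w,w2) \<in> rel \<and> length w2 < length w \<and> set (map fst w2) \<subseteq> set (map fst w) \<and> w2 \<in> lists L"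
    proof (cases "w \<in> lists NT")
      case False
      then obtain c where c: "c \<in> set w" "c \<notin> NT" by auto
      obtain p q where pq: "w = p@[c]@q" using split_list[OF c(1)] by auto
      obtain v g where cv: "c = (v,g)" by (cases c)
      have cL: "c \<in> L" using less.prems c by auto
      then have "g = \<one>\<^bsub>G v\<^esub>" using c cv by (auto simp: NT_def L_iff)
      then have "gp_move E G (p@[(v,\<one>\<^bsub>G v\<^esub>)]@q) (p@q)" using gp_move.delete by metis
      then have "(w, p@q) \<in> rel" using move_rel less.prems pq cv \<open>g = _\<close> by auto
      moreover have "p@q \<in> lists L" using less.prems pq by auto
      ultimately show ?thesis using pq by (intro exI[of _ "p@q"]) auto
    next
      case True
      then have "collv E (map fst w)" using nR by (simp add: Rs_def)
      then obtain p v a m b q where w: "w = p@[(v,a)]@m@[(v,b)]@q" and A: "\<forall>c\<in>set m. E v (fst c)"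
        using collv_word by blast
      have l: "p \<in> lists L" "(v,a) \<in> L" "(v,b) \<in> L" "m \<in> lists L" "q \<in> lists L" using less.prems w by auto
      have v: "v \<in> V" and a: "a \<in> carrier (G v)" and b: "b \<in> carrier (G v)" using l by (auto simp: L_iff)
      have ab: "a \<otimes>\<^bsub>G v\<^esub> b \<in> carrier (G v)" using group.subgroup_self[OF grp[OF v]] a b
        by (simp add: monoid.m_closed group.is_monoid grp[OF v])
      have 1: "(w, p@m@[(v,a)]@([(v,b)]@q)) \<in> rel"
        unfolding w using commute_block[OF A l(1,2,4)] l by simp
      have "gp_move E G ((p@m)@[(v,a),(v,b)]@q) ((p@m)@[(v, a \<otimes>\<^bsub>G v\<^esub> b)]@q)" by (rule gp_move.merge)
      then have 2: "(p@m@[(v,a)]@([(v,b)]@q), p@m@[(v, a \<otimes>\<^bsub>G v\<^esub> b)]@q) \<in> rel"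
        using move_rel l ab v by (simp add: L_iff)
      have "(w, p@m@[(v, a \<otimes>\<^bsub>G v\<^esub> b)]@q) \<in> rel" using rel_trans[OF 1 2] .
      moreover have "p@m@[(v, a \<otimes>\<^bsub>G v\<^esub> b)]@q \<in> lists L" using l ab v by (simp add: L_iff)
      ultimately show ?thesis using w by (intro exI[of _ "p@m@[(v, a \<otimes>\<^bsub>G v\<^esub> b)]@q"]) auto
    qed
    then obtain w2 where w2: "(w,w2) \<in> rel" "length w2 < length w" "set (map fst w2) \<subseteq> set (map fst w)" "w2 \<in> lists L"
      by blast
    from less.hyps[OF w2(2) w2(4)] obtain w' where
      w': "(w2,w') \<in> rel" "Rs w'" "length w' \<le> length w2" "set (map fst w') \<subseteq> set (map fst w2)" by blast
    show ?thesis using rel_trans[OF w2(1) w'(1)] w' w2 by (intro exI[of _ w']) auto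
  qed
qed

lemma Rs_syllable: "Rs w \<Longrightarrow> syllable_word V G w"
proof -
  assume R: "Rs w"
  have "w \<in> lists {(v, g). v \<in> V \<and> g \<in> carrier (G v) \<and> g \<noteq> \<one>\<^bsub>G v\<^esub>}" using R by (simp add: Rs_def NT_def)
  moreover have "\<forall>i. Suc i < length w \<longrightarrow> fst (w ! i) \<noteq> fst (w ! Suc i)"
  proof (intro allI impI notI)
    fix i assume i: "Suc i < length w" "fst (w ! i) = fst (w ! Suc i)"
    then have "collv E (map fst w)" by (intro collv_consec[of i]) auto
    then show False using R by (simp add: Rs_def)
  qed
  ultimately show ?thesis by (simp add: syllable_word_def)
qed

lemma syllable_NT: "syllable_word V G w \<Longrightarrow> w \<in> lists NT"
  by (simp add: syllable_word_def NT_def)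

lemma reduced_iff: "reduced_syllable_word V E G x ws \<longleftrightarrow> Rs ws \<and> cls ws = x"
proof
  assume r: "reduced_syllable_word V E G x ws"
  then have s: "syllable_word V G ws" and c: "cls ws = x"
    and m: "\<And>ws'. syllable_word V G ws' \<Longrightarrow> cls ws' = x \<Longrightarrow> length ws \<le> length ws'"
    by (auto simp: reduced_syllable_word_def)
  have wL: "ws \<in> lists L" using syllable_NT[OF s] lists_NT_L by blast
  have "Rs ws"
  proof (rule ccontr)
    assume nR: "\<not> Rs ws"
    obtain w' where w': "(ws,w') \<in> rel" "Rs w'" "length w' < length ws"
      using reduce[OF wL] nR by blast
    have "w' \<in> lists L" using rel_lists[OF w'(1)] by simp
    then have "cls w' = x" using c w'(1) cls_eq wL by metis
    then have "length ws \<le> length w'" using m Rs_syllable[OF w'(2)] by blast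
    then show False using w'(3) by simp
  qed
  then show "Rs ws \<and> cls ws = x" using c by simp
next
  assume a: "Rs ws \<and> cls ws = x"
  have wL: "ws \<in> lists L" using a lists_NT_L by (simp add: Rs_def)
  have "\<forall>ws'. syllable_word V G ws' \<and> cls ws' = x \<longrightarrow> length ws \<le> length ws'"
  proof (intro allI impI)
    fix ws' assume b: "syllable_word V G ws' \<and> cls ws' = x"
    have wL': "ws' \<in> lists L" using b syllable_NT lists_NT_L by blast
    obtain w'' where w'': "(ws',w'') \<in> rel" "Rs w''" "length w'' \<le> length ws'"
      using reduce[OF wL'] by blast
    have "(ws,ws') \<in> rel" using a b cls_eq wL wL' by metis
    then have "(ws,w'') \<in> rel" using w''(1) rel_trans by blast
    then have "length ws = length w''" using NF_len a w''(2) by blast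
    then show "length ws \<le> length ws'" using w''(3) by simp
  qed
  then show "reduced_syllable_word V E G x ws"
    using a Rs_syllable by (simp add: reduced_syllable_word_def)
qed

end


context gpl
begin

definition LU where "LU U = {(v,g). v \<in> U \<and> g \<in> carrier (G v)}"

lemma LU_L: "U \<subseteq> V \<Longrightarrow> c \<in> LU U \<Longrightarrow> c \<in> L"
  by (auto simp: LU_def L_iff)

lemma lists_LU_L: "U \<subseteq> V \<Longrightarrow> w \<in> lists (LU U) \<Longrightarrow> w \<in> lists L"
  using LU_L by blast

lemma sub_word: assumes U: "U \<subseteq> V" and b: "b \<in> gp_sub V E G U"
  shows "\<exists>ws \<in> lists (LU U). b = cls ws"
proof -
  have "b \<in> generate GP (\<Union>v\<in>U. (\<lambda>g. cls [(v, g)]) ` carrier (G v))"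
    using b by (simp add: gp_sub_def)
  then show ?thesis
  proof (induction rule: generate.induct)
    case one
    then show ?case by (intro bexI[of _ "[]"]) (simp_all add: one_GP)
  next
    case (incl h)
    then obtain v g where vg: "v \<in> U" "g \<in> carrier (G v)" "h = cls [(v,g)]" by blast
    then show ?case by (intro bexI[of _ "[(v,g)]"]) (simp_all add: LU_def)
  next
    case (inv h)
    then obtain v g where vg: "v \<in> U" "g \<in> carrier (G v)" "h = cls [(v,g)]" by blast
    have vV: "v \<in> V" using vg U by blast
    have l: "[(v,g)] \<in> lists L" using vg vV by (simp add: L_iff)
    have "inv\<^bsub>GP\<^esub> h = cls (winv [(v,g)])" using inv_cls[OF l] vg by simp
    moreover have "winv [(v,g)] = [(v, inv\<^bsub>G v\<^esub> g)]" by (simp add: winv_def linv_def)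
    moreover have "inv\<^bsub>G v\<^esub> g \<in> carrier (G v)" using group.inv_closed[OF grp[OF vV] vg(2)] .
    ultimately show ?case using vg by (intro bexI[of _ "[(v, inv\<^bsub>G v\<^esub> g)]"]) (simp_all add: LU_def)
  next
    case (eng h1 h2)
    then obtain w1 w2 where w: "w1 \<in> lists (LU U)" "h1 = cls w1" "w2 \<in> lists (LU U)" "h2 = cls w2" by blast
    have "h1 \<otimes>\<^bsub>GP\<^esub> h2 = cls (w1@w2)" using w mult_cls lists_LU_L[OF U] by simp
    then show ?case using w by (intro bexI[of _ "w1@w2"]) simp_all
  qed
qed

lemma word_sub: assumes U: "U \<subseteq> V" shows "ws \<in> lists (LU U) \<Longrightarrow> cls ws \<in> gp_sub V E G U"
proof (induction ws)
  case Nil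
  then show ?case using generate.one[of GP] by (simp add: gp_sub_def one_GP)
next
  case (Cons c ws)
  obtain v g where c: "c = (v,g)" by (cases c)
  have vg: "v \<in> U" "g \<in> carrier (G v)" using Cons.prems c by (auto simp: LU_def)
  have "cls [c] \<in> (\<Union>v\<in>U. (\<lambda>g. cls [(v, g)]) ` carrier (G v))" using vg c by blast
  then have 1: "cls [c] \<in> gp_sub V E G U" unfolding gp_sub_def by (rule generate.incl)
  have 2: "cls ws \<in> gp_sub V E G U" using Cons by simp
  have l: "[c] \<in> lists L" "ws \<in> lists L" using Cons.prems lists_LU_L[OF U] LU_L[OF U] by auto
  have "cls (c#ws) = cls [c] \<otimes>\<^bsub>GP\<^esub> cls ws" using mult_cls[OF l] by simp
  then show ?case using generate.eng[OF 1[unfolded gp_sub_def] 2[unfolded gp_sub_def]] by (simp add: gp_sub_def)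
qed

lemma sub_carrier: "U \<subseteq> V \<Longrightarrow> b \<in> gp_sub V E G U \<Longrightarrow> b \<in> carrier GP"
  using sub_word cls_in lists_LU_L by blast

lemma sub_mult: "U \<subseteq> V \<Longrightarrow> b \<in> gp_sub V E G U \<Longrightarrow> b' \<in> gp_sub V E G U \<Longrightarrow> b \<otimes>\<^bsub>GP\<^esub> b' \<in> gp_sub V E G U"
  unfolding gp_sub_def by (rule generate.eng)

lemma sub_inv: assumes U: "U \<subseteq> V" and b: "b \<in> gp_sub V E G U" shows "inv\<^bsub>GP\<^esub> b \<in> gp_sub V E G U"
proof -
  obtain ws where ws: "ws \<in> lists (LU U)" "b = cls ws" using sub_word[OF U b] by blast
  have l: "ws \<in> lists L" using lists_LU_L[OF U ws(1)] .
  have "winv ws \<in> lists (LU U)"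
  proof -
    have "\<forall>c\<in>set ws. linv c \<in> LU U"
    proof
      fix c assume "c \<in> set ws"
      then have "c \<in> LU U" using ws by auto
      then obtain v g where "c = (v,g)" "v \<in> U" "g \<in> carrier (G v)" by (auto simp: LU_def)
      moreover have "v \<in> V" using \<open>v \<in> U\<close> U by blast
      ultimately show "linv c \<in> LU U" using group.inv_closed[OF grp] by (simp add: linv_def LU_def)
    qed
    then show ?thesis by (auto simp: winv_def)
  qed
  then show ?thesis using inv_cls[OF l] ws word_sub[OF U] by simp
qed

lemma reduce_cls: "w \<in> lists L \<Longrightarrow> \<exists>w'. Rs w' \<and> cls w' = cls w \<and> set (map fst w') \<subseteq> set (map fst w)"
proof -
  assume w: "w \<in> lists L"
  obtain w' where w': "(w,w') \<in> rel" "Rs w'" "set (map fst w') \<subseteq> set (map fst w)" using reduce[OF w] by blast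
  have "w' \<in> lists L" using rel_lists[OF w'(1)] by simp
  then have "cls w' = cls w" using w'(1) cls_eq w rel_sym by metis
  then show ?thesis using w' by blast
qed

lemma Rs_L: "Rs w \<Longrightarrow> w \<in> lists L"
  using lists_NT_L by (simp add: Rs_def)

lemma decomp: assumes U: "U \<subseteq> V" shows "Rs w \<Longrightarrow> \<exists>x b. x \<in> carrier GP \<and> permissible V E G U x \<and>
   b \<in> gp_sub V E G U \<and> cls w = x \<otimes>\<^bsub>GP\<^esub> b"
proof (induction "length w" arbitrary: w rule: less_induct)
  case less
  interpret GPg: group GP by (rule GP_group)
  have wL: "w \<in> lists L" using Rs_L[OF less.prems] .
  show ?case
  proof (cases "permissible V E G U (cls w)")
    case True
    have "\<one>\<^bsub>GP\<^esub> \<in> gp_sub V E G U" using word_sub[OF U, of "[]"] by (simp add: one_GP)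
    moreover have "cls w = cls w \<otimes>\<^bsub>GP\<^esub> \<one>\<^bsub>GP\<^esub>" using cls_in[OF wL] by simp
    ultimately show ?thesis using True cls_in[OF wL] by blast
  next
    case False
    then obtain ws where ws: "reduced_syllable_word V E G (cls w) ws" "ws \<noteq> []" "fst (last ws) \<in> U"
      by (auto simp: permissible_def)
    have R: "Rs ws" and cw: "cls ws = cls w" using ws(1) reduced_iff by auto
    have wsL: "ws \<in> lists L" using Rs_L[OF R] .
    have "(w, ws) \<in> rel" using cw cls_eq wL wsL by metis
    then have len: "length w = length ws" using NF_len less.prems R by blast
    obtain ws0 c where wsc: "ws = ws0@[c]" using ws(2) by (cases ws rule: rev_exhaust) auto
    have R0: "Rs ws0" using R wsc Rs_prefix by blast
    have "length ws0 < length w" using len wsc by simp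
    then obtain x b0 where xb: "x \<in> carrier GP" "permissible V E G U x" "b0 \<in> gp_sub V E G U" "cls ws0 = x \<otimes>\<^bsub>GP\<^esub> b0"
      using less.hyps R0 by blast
    have cNT: "c \<in> NT" using R wsc by (simp add: Rs_def)
    have cU: "fst c \<in> U" using ws(3) wsc by simp
    have cLU: "[c] \<in> lists (LU U)" using cNT cU by (cases c) (auto simp: NT_def LU_def)
    have cs: "cls [c] \<in> gp_sub V E G U" using word_sub[OF U cLU] .
    have l0: "ws0 \<in> lists L" "[c] \<in> lists L" using wsL wsc by auto
    have "cls w = cls ws0 \<otimes>\<^bsub>GP\<^esub> cls [c]" using cw wsc mult_cls[OF l0] by simp
    also have "\<dots> = x \<otimes>\<^bsub>GP\<^esub> (b0 \<otimes>\<^bsub>GP\<^esub> cls [c])"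
      using xb sub_carrier[OF U] cs GPg.m_assoc by simp
    finally show ?thesis using xb sub_mult[OF U xb(3) cs] by blast
  qed
qed

lemma core: assumes U: "U \<subseteq> V" and x: "x \<in> carrier GP" and px: "permissible V E G U x"
  and px': "permissible V E G U (x \<otimes>\<^bsub>GP\<^esub> c)" and c: "c \<in> gp_sub V E G U"
  shows "x \<otimes>\<^bsub>GP\<^esub> c = x"
proof -
  interpret GPg: group GP by (rule GP_group)
  obtain wx0 where wx0: "wx0 \<in> lists L" "x = cls wx0" using carrier_GP[OF x] by blast
  obtain wx where wx: "Rs wx" "cls wx = x" using reduce_cls[OF wx0(1)] wx0 by metis
  obtain wc0 where wc0: "wc0 \<in> lists (LU U)" "c = cls wc0" using sub_word[OF U c] by blast
  have wc0L: "wc0 \<in> lists L" using lists_LU_L[OF U wc0(1)] .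
  obtain wc where wc: "Rs wc" "cls wc = c" "set (map fst wc) \<subseteq> set (map fst wc0)"
    using reduce_cls[OF wc0L] wc0 by metis
  have wcU: "set (map fst wc) \<subseteq> U" using wc(3) wc0(1) by (force simp: LU_def)
  have wxL: "wx \<in> lists L" and wcL: "wc \<in> lists L" using Rs_L wx wc by auto
  show ?thesis
  proof (cases "wc = []")
    case True
    then have "c = \<one>\<^bsub>GP\<^esub>" using wc by (simp add: one_GP)
    then show ?thesis using x by simp
  next
    case ne: False
    have xc: "x \<otimes>\<^bsub>GP\<^esub> c = cls (wx@wc)" using mult_cls[OF wxL wcL] wx wc by simp
    have NT: "wx@wc \<in> lists NT" using wx wc by (simp add: Rs_def)
    have "last wc \<in> set wc" using ne by simp
    then have "fst (last wc) \<in> set (map fst wc)" by simp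
    then have lastU: "fst (last (wx@wc)) \<in> U" using ne wcU by auto
    show ?thesis
    proof (cases "collv E (map fst (wx@wc))")
      case False
      then have "Rs (wx@wc)" using NT by (simp add: Rs_def)
      then have "reduced_syllable_word V E G (x \<otimes>\<^bsub>GP\<^esub> c) (wx@wc)" using xc reduced_iff by simp
      then have "\<not> permissible V E G U (x \<otimes>\<^bsub>GP\<^esub> c)" using ne lastU by (auto simp: permissible_def)
      then show ?thesis using px' by simp
    next
      case True
      have n1: "\<not> collv E (map fst wx)" and n2: "\<not> collv E (map fst wc)" using wx wc by (simp_all add: Rs_def)
      obtain P a M where PM: "map fst wx = P@([a]@M)" "\<forall>c\<in>set M. E a c" "a \<in> set (map fst wc)"
        using collv_app[OF n1 n2] True by auto
      from map_eq_append_conv[THEN iffD1, OF PM(1)] obtain p r where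
        pr: "wx = p@r" "P = map fst p" "[a]@M = map fst r" by blast
      from pr(3) obtain c1 m where r: "r = c1#m" "fst c1 = a" "map fst m = M"
        by (cases r) auto
      have c1: "c1 = (a, snd c1)" using r(2) by (cases c1) simp
      have wxs: "wx = p@[(a, snd c1)]@m" using pr(1) r(1) c1 by (metis append_Cons append_Nil)
      have A: "\<forall>y\<in>set m. E a (fst y)"
      proof
        fix y assume "y \<in> set m"
        then have "fst y \<in> set M" using r(3) by force
        then show "E a (fst y)" using PM(2) by blast
      qed
      have l: "p \<in> lists L" "(a, snd c1) \<in> L" "m \<in> lists L" using wxL wxs by auto
      have rel1: "(wx, p@m@[(a, snd c1)]) \<in> rel"
        using commute_block[OF A l(1,2,3), of "[]"] wxs by simp
      have Rwx: "\<not> collv E (map fst p @ [a] @ map fst m)" using n1 wxs by simp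
      have "\<forall>c\<in>set (map fst m). E a c" using A by auto
      then have "\<not> collv E (map fst p @ map fst m @ [a])" using collv_move[OF Rwx] by blast
      moreover have "p@m@[(a, snd c1)] \<in> lists NT" using wx wxs by (auto simp: Rs_def)
      ultimately have R2: "Rs (p@m@[(a, snd c1)])" by (simp add: Rs_def)
      have "p@m@[(a, snd c1)] \<in> lists L" using l by simp
      then have "cls (p@m@[(a, snd c1)]) = x" using rel1 wx cls_eq wxL by metis
      then have "reduced_syllable_word V E G x (p@m@[(a, snd c1)])" using R2 reduced_iff by simp
      moreover have "a \<in> U" using PM(3) wcU by blast
      ultimately have "\<not> permissible V E G U x" by (auto simp: permissible_def)
      then show ?thesis using px by simp
    qed
  qed
qed

end


lemma wsum_mem: "(v,s) \<in> set ws \<Longrightarrow> real (f v) \<le> (\<Sum>(v, s)\<leftarrow>ws. real (f v))"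
proof (induction ws)
  case Nil then show ?case by simp
next
  case (Cons c ws)
  have nn: "0 \<le> (\<Sum>(v, s)\<leftarrow>ws. real (f v))" by (induction ws) auto
  show ?case
  proof (cases "c = (v,s)")
    case True then show ?thesis using nn by simp
  next
    case False
    then have "real (f v) \<le> (\<Sum>(v, s)\<leftarrow>ws. real (f v))" using Cons by simp
    moreover have "0 \<le> (case c of (v, s) \<Rightarrow> real (f v))" by (cases c) simp
    ultimately show ?thesis by simp
  qed
qed

lemma wsum_nat: "(\<Sum>(v, s)\<leftarrow>ws. real (f v)) = real (\<Sum>(v, s)\<leftarrow>ws. f v)"
  by (induction ws) (auto split: prod.splits)

context gpl
begin

lemma letter_S: assumes S_sub: "S v \<subseteq> carrier (G v)" and S_inv: "\<forall>s\<in>S v. inv\<^bsub>G v\<^esub> s \<in> S v"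
  and S_gen: "generate (G v) (S v) = carrier (G v)" and v: "v \<in> V" and g: "g \<in> carrier (G v)"
  shows "\<exists>ws \<in> lists {(v,s). v \<in> V \<and> s \<in> S v}. (ws, [(v,g)]) \<in> rel"
proof -
  interpret Gv: group "G v" using grp v .
  have "g \<in> generate (G v) (S v)" using g S_gen by simp
  then show ?thesis
  proof (induction rule: generate.induct)
    case one
    have "gp_move E G ([] @ [(v, \<one>\<^bsub>G v\<^esub>)] @ []) ([] @ [])" by (rule gp_move.delete)
    then have "([(v, \<one>\<^bsub>G v\<^esub>)], []) \<in> rel" using move_rel v by (simp add: L_iff)
    then show ?case using rel_sym by (intro bexI[of _ "[]"]) auto
  next
    case (incl h)
    then have "[(v,h)] \<in> lists L" using S_sub v by (auto simp: L_iff)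
    then show ?case using incl v rel_refl by (intro bexI[of _ "[(v,h)]"]) auto
  next
    case (inv h)
    have hi: "inv\<^bsub>G v\<^esub> h \<in> S v" using S_inv inv by blast
    then have "[(v,inv\<^bsub>G v\<^esub> h)] \<in> lists L" using S_sub v by (auto simp: L_iff)
    then show ?case using hi v rel_refl by (intro bexI[of _ "[(v,inv\<^bsub>G v\<^esub> h)]"]) auto
  next
    case (eng h1 h2)
    obtain w1 where w1: "w1 \<in> lists {(v,s). v \<in> V \<and> s \<in> S v}" "(w1, [(v,h1)]) \<in> rel" using eng by blast
    obtain w2 where w2: "w2 \<in> lists {(v,s). v \<in> V \<and> s \<in> S v}" "(w2, [(v,h2)]) \<in> rel" using eng by blast
    have h: "h1 \<in> carrier (G v)" "h2 \<in> carrier (G v)" using eng S_gen by auto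
    have "gp_move E G ([] @ [(v,h1),(v,h2)] @ []) ([] @ [(v, h1 \<otimes>\<^bsub>G v\<^esub> h2)] @ [])" by (rule gp_move.merge)
    then have "([(v,h1),(v,h2)], [(v, h1 \<otimes>\<^bsub>G v\<^esub> h2)]) \<in> rel" using move_rel v h by (simp add: L_iff)
    moreover have "(w1@w2, [(v,h1)]@[(v,h2)]) \<in> rel" using rel_app[OF w1(2) w2(2)] .
    ultimately have "(w1@w2, [(v, h1 \<otimes>\<^bsub>G v\<^esub> h2)]) \<in> rel" using rel_trans by simp
    then show ?case using w1 w2 by (intro bexI[of _ "w1@w2"]) auto
  qed
qed

lemma word_S: assumes S_sub: "\<And>v. v \<in> V \<Longrightarrow> S v \<subseteq> carrier (G v)"
  and S_inv: "\<And>v. v \<in> V \<Longrightarrow> \<forall>s\<in>S v. inv\<^bsub>G v\<^esub> s \<in> S v"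
  and S_gen: "\<And>v. v \<in> V \<Longrightarrow> generate (G v) (S v) = carrier (G v)"
  shows "w \<in> lists L \<Longrightarrow> \<exists>ws \<in> lists {(v,s). v \<in> V \<and> s \<in> S v}. (ws, w) \<in> rel"
proof (induction w)
  case Nil then show ?case using rel_refl by (intro bexI[of _ "[]"]) auto
next
  case (Cons c w)
  obtain v g where c: "c = (v,g)" by (cases c)
  have vg: "v \<in> V" "g \<in> carrier (G v)" using Cons.prems c by (auto simp: L_iff)
  obtain w1 where w1: "w1 \<in> lists {(v,s). v \<in> V \<and> s \<in> S v}" "(w1, [(v,g)]) \<in> rel"
    using letter_S[of S v g, OF S_sub[OF vg(1)] S_inv[OF vg(1)] S_gen[OF vg(1)] vg(1) vg(2)] by blast
  obtain w2 where w2: "w2 \<in> lists {(v,s). v \<in> V \<and> s \<in> S v}" "(w2, w) \<in> rel" using Cons by auto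
  have "(w1@w2, [(v,g)]@w) \<in> rel" using rel_app[OF w1(2) w2(2)] .
  then show ?case using w1 w2 c by (intro bexI[of _ "w1@w2"]) auto
qed

end

theorem lemma3p1:
  fixes V :: "'v set" and E :: "'v \<Rightarrow> 'v \<Rightarrow> bool" and G :: "'v \<Rightarrow> 'g monoid"
    and S :: "'v \<Rightarrow> 'g set" and wbar :: "'v \<Rightarrow> nat" and r :: real
  assumes countV: "countable V"
    and E_sym: "\<And>u v. E u v \<Longrightarrow> E v u"
    and E_irrefl: "\<And>v. \<not> E v v"
    and E_V: "\<And>u v. E u v \<Longrightarrow> u \<in> V \<and> v \<in> V"
    and grp: "\<And>v. v \<in> V \<Longrightarrow> group (G v)"
    and S_fin: "\<And>v. v \<in> V \<Longrightarrow> finite (S v)"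
    and S_sub: "\<And>v. v \<in> V \<Longrightarrow> S v \<subseteq> carrier (G v)"
    and S_inv: "\<And>v s. v \<in> V \<Longrightarrow> s \<in> S v \<Longrightarrow> inv\<^bsub>G v\<^esub> s \<in> S v"
    and S_one: "\<And>v. v \<in> V \<Longrightarrow> \<one>\<^bsub>G v\<^esub> \<notin> S v"
    and S_gen: "\<And>v. v \<in> V \<Longrightarrow> generate (G v) (S v) = carrier (G v)"
    and w_inj: "inj_on wbar V"
    and w_pos: "\<And>v. v \<in> V \<Longrightarrow> wbar v \<ge> 1"
    and w_bij: "infinite V \<Longrightarrow> wbar ` V = {1..}"
    and r_pos: "r > 0"
  defines "GP \<equiv> graph_product V E G"
    and "Vr \<equiv> {v \<in> V. real (wbar v) \<le> r}"
  shows "(\<forall>g \<in> carrier GP. \<exists>x b. x \<in> carrier GP \<and> permissible V E G Vr x \<and>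
            b \<in> gp_sub V E G Vr \<and> g = x \<otimes>\<^bsub>GP\<^esub> b)
       \<and> (\<forall>x x' b b'. x \<in> carrier GP \<and> x' \<in> carrier GP \<and>
            permissible V E G Vr x \<and> permissible V E G Vr x' \<and> x \<noteq> x' \<and>
            b \<in> gp_sub V E G Vr \<and> b' \<in> gp_sub V E G Vr \<longrightarrow>
            gp_dist V E G S wbar (x \<otimes>\<^bsub>GP\<^esub> b) (x' \<otimes>\<^bsub>GP\<^esub> b') > r)"
proof -
  have "gpl V E G" unfolding gpl_def using E_sym E_irrefl grp by blast
  then interpret gpl V E G .
  have U: "Vr \<subseteq> V" by (auto simp: Vr_def)
  interpret GPg: group "graph_product V E G" by (rule GP_group)
  have part1: "\<forall>g \<in> carrier (graph_product V E G). \<exists>x b. x \<in> carrier (graph_product V E G) \<and> permissible V E G Vr x \<and>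
            b \<in> gp_sub V E G Vr \<and> g = x \<otimes>\<^bsub>graph_product V E G\<^esub> b"
  proof
    fix g assume g: "g \<in> carrier (graph_product V E G)"
    obtain w where w: "w \<in> lists (gp_letters V G)" "g = gp_class V E G w" using carrier_GP[OF g] by blast
    obtain w' where w': "Rs w'" "gp_class V E G w' = g" using reduce_cls[OF w(1)] w by metis
    show "\<exists>x b. x \<in> carrier (graph_product V E G) \<and> permissible V E G Vr x \<and>
            b \<in> gp_sub V E G Vr \<and> g = x \<otimes>\<^bsub>graph_product V E G\<^esub> b"
      using decomp[OF U w'(1)] w'(2) by metis
  qed
  have part2: "\<forall>x x' b b'. x \<in> carrier (graph_product V E G) \<and> x' \<in> carrier (graph_product V E G) \<and>
            permissible V E G Vr x \<and> permissible V E G Vr x' \<and> x \<noteq> x' \<and>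
            b \<in> gp_sub V E G Vr \<and> b' \<in> gp_sub V E G Vr \<longrightarrow>
            gp_dist V E G S wbar (x \<otimes>\<^bsub>graph_product V E G\<^esub> b) (x' \<otimes>\<^bsub>graph_product V E G\<^esub> b') > r"
  proof (intro allI impI)
    fix x x' b b'
    assume a: "x \<in> carrier (graph_product V E G) \<and> x' \<in> carrier (graph_product V E G) \<and>
            permissible V E G Vr x \<and> permissible V E G Vr x' \<and> x \<noteq> x' \<and>
            b \<in> gp_sub V E G Vr \<and> b' \<in> gp_sub V E G Vr"
    then have x: "x \<in> carrier (graph_product V E G)" and x': "x' \<in> carrier (graph_product V E G)"
      and px: "permissible V E G Vr x" and px': "permissible V E G Vr x'" and ne: "x \<noteq> x'"
      and b: "b \<in> gp_sub V E G Vr" and b': "b' \<in> gp_sub V E G Vr" by auto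
    have bc: "b \<in> carrier (graph_product V E G)" "b' \<in> carrier (graph_product V E G)"
      using sub_carrier[OF U] b b' by auto
    define y where "y = inv\<^bsub>graph_product V E G\<^esub> (x \<otimes>\<^bsub>graph_product V E G\<^esub> b) \<otimes>\<^bsub>graph_product V E G\<^esub> (x' \<otimes>\<^bsub>graph_product V E G\<^esub> b')"
    have yc: "y \<in> carrier (graph_product V E G)" using x x' bc by (simp add: y_def)
    define c where "c = inv\<^bsub>graph_product V E G\<^esub> x \<otimes>\<^bsub>graph_product V E G\<^esub> x'"
    have cc: "c \<in> carrier (graph_product V E G)" using x x' by (simp add: c_def)
    have xc: "x \<otimes>\<^bsub>graph_product V E G\<^esub> c = x'" using x x' by (simp add: c_def GPg.m_assoc[symmetric])
    have cy: "c = b \<otimes>\<^bsub>graph_product V E G\<^esub> y \<otimes>\<^bsub>graph_product V E G\<^esub> inv\<^bsub>graph_product V E G\<^esub> b'"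
    proof -
      have k: "b \<otimes>\<^bsub>graph_product V E G\<^esub> (inv\<^bsub>graph_product V E G\<^esub> b \<otimes>\<^bsub>graph_product V E G\<^esub> c) = c"
        using bc cc by (simp add: GPg.m_assoc[symmetric])
      show ?thesis using x x' bc cc k by (simp add: c_def y_def GPg.inv_mult_group GPg.m_assoc)
    qed
    let ?N = "{(\<Sum>(v, s)\<leftarrow>ws. real (wbar v)) | ws.
      ws \<in> lists {(v, s). v \<in> V \<and> s \<in> S v} \<and> gp_class V E G ws = y}"
    have dist: "gp_dist V E G S wbar (x \<otimes>\<^bsub>graph_product V E G\<^esub> b) (x' \<otimes>\<^bsub>graph_product V E G\<^esub> b') = Inf ?N"
      by (simp add: gp_dist_def gp_norm_def y_def)
    have Nne: "?N \<noteq> {}"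
    proof -
      obtain w where w: "w \<in> lists (gp_letters V G)" "y = gp_class V E G w" using carrier_GP[OF yc] by blast
      obtain ws where ws: "ws \<in> lists {(v,s). v \<in> V \<and> s \<in> S v}" "(ws, w) \<in> rel"
        using word_S[of S, OF S_sub _ S_gen w(1)] S_inv by blast
      have "ws \<in> lists (gp_letters V G)" using rel_lists[OF ws(2)] by simp
      then have "gp_class V E G ws = y" using ws(2) w cls_eq by metis
      then show ?thesis using ws(1) by blast
    qed
    have lb: "\<forall>e\<in>?N. real_of_int (\<lfloor>r\<rfloor> + 1) \<le> e"
    proof
      fix e assume "e \<in> ?N"
      then obtain ws where ws: "e = (\<Sum>(v, s)\<leftarrow>ws. real (wbar v))" "ws \<in> lists {(v, s). v \<in> V \<and> s \<in> S v}"
        "gp_class V E G ws = y" by blast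
      have "r < e"
      proof (rule ccontr)
        assume "\<not> r < e"
        then have er: "e \<le> r" by simp
        have "\<forall>q\<in>set ws. q \<in> LU Vr"
        proof
          fix q assume cin: "q \<in> set ws"
          obtain v s where cv: "q = (v,s)" by (cases q)
          have vs: "v \<in> V" "s \<in> S v" using cin cv ws(2) by auto
          have "real (wbar v) \<le> e" using wsum_mem[of v s ws wbar] cin cv ws(1) by simp
          then have "v \<in> Vr" using er vs by (simp add: Vr_def)
          then show "q \<in> LU Vr" using cv vs S_sub by (auto simp: LU_def)
        qed
        then have "ws \<in> lists (LU Vr)" by auto
        then have "y \<in> gp_sub V E G Vr" using word_sub[OF U] ws(3) by metis
        then have "c \<in> gp_sub V E G Vr" using cy sub_mult[OF U] sub_inv[OF U] b b' by simp
        then have "x \<otimes>\<^bsub>graph_product V E G\<^esub> c = x" using core[OF U x px, of c] xc px' \<open>c \<in> gp_sub V E G Vr\<close> by simp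
        then show False using xc ne by simp
      qed
      then have "real_of_int \<lfloor>r\<rfloor> < real (\<Sum>(v, s)\<leftarrow>ws. wbar v)" using ws(1) wsum_nat[of wbar ws]
        by (metis floor_le_iff le_less_trans not_less of_int_floor_le)
      then have "\<lfloor>r\<rfloor> < int (\<Sum>(v, s)\<leftarrow>ws. wbar v)" by linarith
      then have "\<lfloor>r\<rfloor> + 1 \<le> int (\<Sum>(v, s)\<leftarrow>ws. wbar v)" by linarith
      then show "real_of_int (\<lfloor>r\<rfloor> + 1) \<le> e" using ws(1) wsum_nat[of wbar ws] by linarith
    qed
    have "real_of_int (\<lfloor>r\<rfloor> + 1) \<le> Inf ?N" using cInf_greatest[OF Nne] lb by blast
    moreover have "r < real_of_int (\<lfloor>r\<rfloor> + 1)" by linarith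
    ultimately show "gp_dist V E G S wbar (x \<otimes>\<^bsub>graph_product V E G\<^esub> b) (x' \<otimes>\<^bsub>graph_product V E G\<^esub> b') > r"
      using dist by linarith
  qed
  show ?thesis unfolding GP_def using part1 part2 by blast
qed


end
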